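(* Let $n$ be even and $F\colon\mathbb F_2^n\to\mathbb F_2^n$ a quadratic APN function with linearity $2^{\frac{n+k}{2}}$ with $k\le n/2$. Write $n=sk+r$ with integers $s,r$, $0\le r<k$. If $k\mid n$ then $|N_F|\ge\frac{2^n-1}{2^k-1}$, and if $k\nmid n$ then $|N_F|\ge 1+2^{\lceil\frac{k+r}{2}\rceil}+2^{k+r}\sum_{i=0}^{s-2}2^{ik}$.
   Context: $\langle\cdot,\cdot\rangle$ is the standard dot product. $F$ is APN if for every $a\ne0$ and $c$, $F(x)+F(x+a)=c$ has at most 2 solutions; quadratic if each component $F_b(x)=\langle b,F(x)\rangle$ is a quadratic form plus an affine function. $W_F(b,a)=\sum_x(-1)^{F_b(x)+\langle x,a\rangle}$; linearity $L(F)=\max_{a,\,b\neq0}|W_F(b,a)|$. $F_b$ is bent if $|W_F(b,a)|=2^{n/2}$ for all $a$. $N_F=\{b\in\mathbb F_2^n\setminus\{0\}\colon F_b\text{ not bent}\}$. *)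

theory Defs
  imports Complex_Main
begin

text \<open>Vectors of F_2^n are represented as boolean lists of length n
  (True = 1, False = 0); addition is componentwise XOR.\<close>

definition vecs :: "nat \<Rightarrow> bool list set" where
  "vecs n = {x. length x = n}"

definition vzero :: "nat \<Rightarrow> bool list" where
  "vzero n = replicate n False"

definition vadd :: "bool list \<Rightarrow> bool list \<Rightarrow> bool list" where
  "vadd x y = map2 (\<lambda>u v. u \<noteq> v) x y"

definition dotp :: "bool list \<Rightarrow> bool list \<Rightarrow> bool" where
  "dotp x y = odd (card {i. i < length x \<and> i < length y \<and> x ! i \<and> y ! i})"

definition component :: "(bool list \<Rightarrow> bool list) \<Rightarrow> bool list \<Rightarrow> bool list \<Rightarrow> bool" where
  "component F b x = dotp b (F x)"

definition maps_into :: "nat \<Rightarrow> (bool list \<Rightarrow> bool list) \<Rightarrow> bool" where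
  "maps_into n F \<longleftrightarrow> (\<forall>x\<in>vecs n. F x \<in> vecs n)"

definition is_APN :: "nat \<Rightarrow> (bool list \<Rightarrow> bool list) \<Rightarrow> bool" where
  "is_APN n F \<longleftrightarrow> (\<forall>a\<in>vecs n. a \<noteq> vzero n \<longrightarrow> (\<forall>c\<in>vecs n.
      card {x\<in>vecs n. vadd (F x) (F (vadd x a)) = c} \<le> 2))"

definition quad_form :: "nat \<Rightarrow> (nat \<Rightarrow> nat \<Rightarrow> bool) \<Rightarrow> bool list \<Rightarrow> bool" where
  "quad_form n c x = odd (card {(i,j). i \<le> j \<and> j < n \<and> c i j \<and> x ! i \<and> x ! j})"

definition affine_fun :: "nat \<Rightarrow> (nat \<Rightarrow> bool) \<Rightarrow> bool \<Rightarrow> bool list \<Rightarrow> bool" where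
  "affine_fun n a e x = (odd (card {i. i < n \<and> a i \<and> x ! i}) \<noteq> e)"

definition is_quadratic :: "nat \<Rightarrow> (bool list \<Rightarrow> bool list) \<Rightarrow> bool" where
  "is_quadratic n F \<longleftrightarrow> (\<forall>b\<in>vecs n. \<exists>c a e. \<forall>x\<in>vecs n.
      component F b x = (quad_form n c x \<noteq> affine_fun n a e x))"

definition walsh :: "nat \<Rightarrow> (bool list \<Rightarrow> bool list) \<Rightarrow> bool list \<Rightarrow> bool list \<Rightarrow> int" where
  "walsh n F b a = (\<Sum>x\<in>vecs n. (-1) ^ (if component F b x \<noteq> dotp x a then 1 else 0))"

definition linearity :: "nat \<Rightarrow> (bool list \<Rightarrow> bool list) \<Rightarrow> int" where
  "linearity n F = Max {\<bar>walsh n F b a\<bar> | a b. a \<in> vecs n \<and> b \<in> vecs n \<and> b \<noteq> vzero n}"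

definition is_bent_comp :: "nat \<Rightarrow> (bool list \<Rightarrow> bool list) \<Rightarrow> bool list \<Rightarrow> bool" where
  "is_bent_comp n F b \<longleftrightarrow> (\<forall>a\<in>vecs n. \<bar>real_of_int (walsh n F b a)\<bar> = 2 powr (real n / 2))"

definition NF :: "nat \<Rightarrow> (bool list \<Rightarrow> bool list) \<Rightarrow> bool list set" where
  "NF n F = {b\<in>vecs n. b \<noteq> vzero n \<and> \<not> is_bent_comp n F b}"

end

theory Submission
  imports Defs
begin


lemma comb_core:
  fixes N :: "'b set" and Phi :: "'c set" and z :: "'b \<Rightarrow> int" and P :: "'c \<Rightarrow> 'b \<Rightarrow> bool"
    and n k s r :: nat
  assumes finN: "finite N" and finPhi: "finite Phi" and cPhi: "int (card Phi) = 2^n - 1"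
    and zpow: "\<And>U. U\<in>N \<Longrightarrow> \<exists>h. z U = 2^h \<and> 1 \<le> h \<and> h \<le> k"
    and pts: "(\<Sum>U\<in>N. z U - 1) = 2^n - 1"
    and hyp: "\<And>\<phi>. \<phi>\<in>Phi \<Longrightarrow> (\<Sum>U\<in>{U\<in>N. P \<phi> U}. z U) = int (card N) - 1"
    and perp1: "\<And>U. U\<in>N \<Longrightarrow> z U * (int (card {\<phi>\<in>Phi. P \<phi> U}) + 1) = 2^n"
    and perp2: "\<And>U U'. U\<in>N \<Longrightarrow> U'\<in>N \<Longrightarrow> U \<noteq> U' \<Longrightarrow>
          z U * z U' * (int (card {\<phi>\<in>Phi. P \<phi> U \<and> P \<phi> U'}) + 1) = 2^n"
    and nsk: "n = s*k + r" and r0: "0 < r" and rk: "r < k" and kn: "2*k \<le> n"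
  shows "int (card N) \<ge> 2^(k+r) * (\<Sum>i=0..s-2. 2^(i*k)) + 1 + 2^((k+r+1) div 2)"
proof -
  define q :: int where "q = 2^k"
  define S :: int where "S = 2^(k+r) * (\<Sum>i=0..s-2. 2^(i*k))"
  define M :: int where "M = int (card N)"
  define c where "c = (k+r+1) div 2"
  define c' where "c' = (k+r) div 2"
  have cc: "c + c' = k + r" unfolding c_def c'_def by linarith
  have c1: "1 \<le> c" and ck: "c \<le> k" using r0 rk unfolding c_def by linarith+
  have s2: "s \<ge> 2"
  proof (rule ccontr)
    assume "\<not> 2 \<le> s" then have "s = 0 \<or> s = 1" by linarith
    then show False using nsk kn rk by auto
  qed
  have q2: "q \<ge> 2"
    proof -
    have "(2::int)^1 \<le> 2^k" by (rule power_increasing) (use rk r0 in auto)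
    then show ?thesis by (simp add: q_def)
  qed
  have geo: "(\<Sum>i=0..s-2. (2::int)^(i*k)) * (q - 1) = q^(s-1) - 1"
  proof -
    have "(1 - q) * (\<Sum>i=0..s-2. q^i) = q^0 - q^Suc (s-2)"
      by (rule sum_gp_multiplied) simp
    moreover have "(\<Sum>i=0..s-2. (2::int)^(i*k)) = (\<Sum>i=0..s-2. q^i)"
      unfolding q_def by (simp add: power_mult[symmetric] mult.commute)
    moreover have "Suc (s-2) = s - 1" using s2 by simp
    ultimately show ?thesis by (simp add: algebra_simps)
  qed
  have SS: "S * (q - 1) = 2^n - 2^(k+r)"
  proof -
    have "S * (q - 1) = 2^(k+r) * (q^(s-1) - 1)" unfolding S_def using geo by (simp add: mult.assoc)
    also have "\<dots> = 2^(k+r+(s-1)*k) - 2^(k+r)" unfolding q_def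
      by (simp add: algebra_simps power_add power_mult[symmetric])
    also have "k+r+(s-1)*k = n" using nsk s2
      proof -
      obtain s' where "s = Suc s'" using s2 by (cases s) auto
      then show ?thesis using nsk by simp
    qed
    finally show ?thesis .
  qed
  have qS: "q dvd S" unfolding S_def q_def by (simp add: power_add)
  then obtain S0 where S0: "S = q * S0" by blast

  have zN: "2 \<le> z U \<and> z U \<le> q \<and> (z U \<noteq> q \<longrightarrow> 2 * z U \<le> q)" if UN: "U \<in> N" for U
  proof -
    obtain h where h: "z U = 2^h" "1 \<le> h" "h \<le> k" using zpow[OF UN] by blast
    have a: "(2::int)^1 \<le> 2^h" by (rule power_increasing) (use h in auto)
    have b: "(2::int)^h \<le> 2^k" by (rule power_increasing) (use h in auto)
    have "2 * z U \<le> q" if "z U \<noteq> q"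
    proof -
      have "h < k" using that h unfolding q_def by (metis le_neq_implies_less)
      then have "(2::int)^(Suc h) \<le> 2^k" by (intro power_increasing) auto
      then show ?thesis using h unfolding q_def by simp
    qed
    then show ?thesis using a b h unfolding q_def by auto
  qed
  have zNle: "z U \<le> q" if "U \<in> N" for U using zN[OF that] by simp
  define A where "A = {U\<in>N. z U = q}"
  define T where "T = {U\<in>N. z U \<noteq> q}"
  have finA: "finite A" and finT: "finite T" using finN unfolding A_def T_def by auto
  have NAT: "N = A \<union> T" and ATd: "A \<inter> T = {}" unfolding A_def T_def by auto
  define t :: int where "t = int (card T)"
  define a :: int where "a = int (card A)"
  define W :: int where "W = (\<Sum>U\<in>T. z U)"
  have Mat: "M = a + t" unfolding M_def a_def t_def NAT using card_Un_disjoint[OF finA finT ATd] by simp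
  have zT: "2 \<le> z U" "2 * z U \<le> q" if "U \<in> T" for U using zN that unfolding T_def by auto
  have ptsAT: "a * (q - 1) + (W - t) = 2^n - 1"
  proof -
    have "(\<Sum>U\<in>N. z U - 1) = (\<Sum>U\<in>A. z U - 1) + (\<Sum>U\<in>T. z U - 1)"
      unfolding NAT by (rule sum.union_disjoint[OF finA finT ATd])
    also have "(\<Sum>U\<in>A. z U - 1) = a * (q - 1)" unfolding a_def A_def by simp
    also have "(\<Sum>U\<in>T. z U - 1) = W - t" unfolding W_def t_def by (simp add: sum_subtractf)
    finally show ?thesis using pts by simp
  qed
  have zT0: "0 \<le> z U" if "U \<in> T" for U using zT[OF that] by simp
  define tau where "tau \<phi> = (\<Sum>U\<in>T. if P \<phi> U then z U else 0)" for \<phi>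
  have tau_nonneg: "tau \<phi> \<ge> 0" for \<phi> unfolding tau_def by (intro sum_nonneg) (auto simp: zT0)
  have hypAT: "q * int (card {U\<in>A. P \<phi> U}) + tau \<phi> = M - 1" if "\<phi> \<in> Phi" for \<phi>
  proof -
    have "(\<Sum>U\<in>{U\<in>N. P \<phi> U}. z U) = (\<Sum>U\<in>N. if P \<phi> U then z U else 0)"
      using finN by (simp add: sum.inter_filter)
    also have "\<dots> = (\<Sum>U\<in>A. if P \<phi> U then z U else 0) + tau \<phi>"
      unfolding NAT tau_def by (rule sum.union_disjoint[OF finA finT ATd])
    also have "(\<Sum>U\<in>A. if P \<phi> U then z U else 0) = (\<Sum>U\<in>{U\<in>A. P \<phi> U}. z U)"
      using finA by (simp add: sum.inter_filter)
    also have "\<dots> = (\<Sum>U\<in>{U\<in>A. P \<phi> U}. q)" by (rule sum.cong) (auto simp: A_def)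
    finally show ?thesis using hyp[OF that] unfolding M_def by simp
  qed
  define D where "D = M - 1 - S"
  have taucong: "\<exists>j. tau \<phi> = D + q * j" if "\<phi> \<in> Phi" for \<phi>
  proof -
    have "tau \<phi> = D + q * (S0 - int (card {U\<in>A. P \<phi> U}))"
      using hypAT[OF that] S0 unfolding D_def by (simp add: algebra_simps)
    then show ?thesis by blast
  qed
  have Nle: "2^n - 1 \<le> M * (q - 1)"
  proof -
    have "(\<Sum>U\<in>N. z U - 1) \<le> (\<Sum>U\<in>N. q - 1)" by (rule sum_mono, drule zNle, simp)
    then show ?thesis using pts unfolding M_def by simp
  qed
  have kr: "(2::int)^(k+r) \<ge> 2 * q"
  proof -
    have "(2::int)^(Suc k) \<le> 2^(k+r)" by (rule power_increasing) (use r0 in auto)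
    then show ?thesis unfolding q_def by simp
  qed
  have Dpos: "D > 0"
  proof -
    have "(S + 1) * (q - 1) < M * (q - 1)" using Nle SS kr q2 by (simp add: algebra_simps)
    then have "S + 1 < M" using q2 by (simp add: mult_less_cancel_right)
    then show ?thesis unfolding D_def by simp
  qed
  have ptsD: "(1 + D - t) * (q - 1) + (W - t) = 2^(k+r) - 1"
  proof -
    have "a = S + 1 + D - t" using Mat unfolding D_def by simp
    then have "(S + 1 + D - t) * (q - 1) + (W - t) = 2^n - 1" using ptsAT by simp
    then show ?thesis using SS by (simp add: algebra_simps)
  qed
  have c_pow: "(2::int)^c \<le> q" unfolding q_def by (rule power_increasing) (use ck in auto)
  have c_pow1: "(2::int)^c \<ge> 2"
  proof -
    have "(2::int)^1 \<le> 2^c" by (rule power_increasing) (use c1 in auto)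
    then show ?thesis by simp
  qed
  have cc_pow: "(2::int)^c * 2^c' = 2^(k+r)" using cc by (simp add: power_add[symmetric])
  have c'_pow: "(2::int)^c' \<le> q" unfolding q_def by (rule power_increasing) (use rk in \<open>auto simp: c'_def\<close>)
  have nPhi: "Phi \<noteq> {}"
  proof
    assume "Phi = {}"
    then have "(2::int)^n = 1" using cPhi by simp
    moreover have "(2::int)^1 \<le> 2^n" by (rule power_increasing) (use kn rk in auto)
    ultimately show False by simp
  qed
  show ?thesis
  proof (rule ccontr)
    assume "\<not> ?thesis"
    then have Dc: "1 + D \<le> 2^c" unfolding D_def M_def S_def c_def by simp
    then have Dq: "D < q" using c_pow by simp
    have tauge: "tau \<phi> \<ge> D" if ph: "\<phi> \<in> Phi" for \<phi>
    proof -
      obtain j where j: "tau \<phi> = D + q * j" using taucong[OF ph] by blast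
      have "j \<ge> 0"
      proof (rule ccontr)
        assume "\<not> j \<ge> 0"
        then have "q * j \<le> q * (-1)" using q2 by (intro mult_left_mono) auto
        then show False using j tau_nonneg[of \<phi>] Dq by simp
      qed
      then show ?thesis using j q2 by simp
    qed
    have sumtau: "(\<Sum>\<phi>\<in>Phi. tau \<phi>) = t * 2^n - W"
    proof -
      have "(\<Sum>\<phi>\<in>Phi. tau \<phi>) = (\<Sum>U\<in>T. \<Sum>\<phi>\<in>Phi. if P \<phi> U then z U else 0)"
        unfolding tau_def by (rule sum.swap)
      also have "\<dots> = (\<Sum>U\<in>T. 2^n - z U)"
      proof (rule sum.cong[OF refl])
        fix U assume U: "U \<in> T"
        have "(\<Sum>\<phi>\<in>Phi. if P \<phi> U then z U else 0) = (\<Sum>\<phi>\<in>{\<phi>\<in>Phi. P \<phi> U}. z U)"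
          using finPhi by (rule sum.inter_filter[symmetric])
        also have "\<dots> = z U * int (card {\<phi>\<in>Phi. P \<phi> U})" by simp
        also have "\<dots> = 2^n - z U" using perp1[of U] U unfolding T_def by (simp add: algebra_simps)
        finally show "(\<Sum>\<phi>\<in>Phi. if P \<phi> U then z U else 0) = 2^n - z U" .
      qed
      also have "\<dots> = t * 2^n - W" unfolding t_def W_def by (simp add: sum_subtractf)
      finally show ?thesis .
    qed
    have sumge: "t * 2^n - W \<ge> D * (2^n - 1)"
    proof -
      have "(\<Sum>\<phi>\<in>Phi. D) \<le> (\<Sum>\<phi>\<in>Phi. tau \<phi>)" by (rule sum_mono) (rule tauge)
      then show ?thesis using sumtau cPhi by (simp add: mult.commute)
    qed
    have Tne: "T \<noteq> {}"
    proof
      assume "T = {}"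
      then have "tau \<phi> = 0" for \<phi> unfolding tau_def by simp
      then show False using tauge nPhi Dpos by fastforce
    qed
    have tD: "t \<ge> D + 1"
    proof (rule ccontr)
      assume "\<not> t \<ge> D + 1"
      then have "t \<le> D" by simp
      then have "t * 2^n \<le> D * 2^n" by (intro mult_right_mono) auto
      moreover have "D * (2^n - 1) = D * 2^n - D" by (simp add: algebra_simps)
      ultimately have WD: "W \<le> D" using sumge by linarith
      obtain U0 where U0: "U0 \<in> T" using Tne by blast
      have U0N: "U0 \<in> N" using U0 unfolding T_def by simp
      define c0 where "c0 = int (card {\<phi>\<in>Phi. P \<phi> U0})"
      have "z U0 * (c0 + 1) = 2^n" using perp1[OF U0N] unfolding c0_def .
      moreover have "c0 \<ge> 0" unfolding c0_def by simp
      moreover have "2 \<le> z U0" using zT[OF U0] by simp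
      ultimately have "2 * (c0 + 1) \<le> 2^n" by (metis mult_right_mono add_nonneg_pos zero_less_one less_imp_le)
      then have "c0 < int (card Phi)" using cPhi \<open>c0 \<ge> 0\<close> by simp
      then have "card {\<phi>\<in>Phi. P \<phi> U0} < card Phi" unfolding c0_def by simp
      then obtain \<phi> where ph: "\<phi> \<in> Phi" "\<not> P \<phi> U0" by (metis (mono_tags, lifting) mem_Collect_eq subsetI subset_antisym less_irrefl)
      have "tau \<phi> = (\<Sum>U\<in>T-{U0}. if P \<phi> U then z U else 0)"
        unfolding tau_def using ph U0 finT by (simp add: sum.remove)
      also have "\<dots> \<le> (\<Sum>U\<in>T-{U0}. z U)" by (rule sum_mono) (auto simp: zT0)
      also have "\<dots> = W - z U0" unfolding W_def using U0 finT by (simp add: sum_diff1)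
      finally have "tau \<phi> < D" using WD zT[OF U0] by simp
      then show False using tauge[OF ph(1)] by simp
    qed
    show False
    proof (cases "\<forall>U\<in>T. z U \<le> 2^c'")
      case True
      have "W - t \<le> t * (2^c' - 1)"
      proof -
        have "W - t = (\<Sum>U\<in>T. z U - 1)" unfolding W_def t_def by (simp add: sum_subtractf)
        also have "\<dots> \<le> (\<Sum>U\<in>T. 2^c' - 1)" by (rule sum_mono) (use True in auto)
        finally show ?thesis unfolding t_def by (simp add: mult.commute)
      qed
      then have "2^(k+r) - 1 \<le> (1 + D) * (q - 1) - t * (q - 2^c')" using ptsD by (simp add: algebra_simps)
      also have "t * (q - 2^c') \<ge> (1 + D) * (q - 2^c')" using tD c'_pow by (intro mult_right_mono) auto
      then have "(1 + D) * (q - 1) - t * (q - 2^c') \<le> (1 + D) * (2^c' - 1)" by (simp add: algebra_simps)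
      also have "\<dots> \<le> 2^c * (2^c' - 1)" using Dc by (intro mult_right_mono) auto
      also have "\<dots> = 2^(k+r) - 2^c" using cc_pow by (simp add: algebra_simps)
      finally show False using c_pow1 by simp
    next
      case False
      then obtain U1 where U1: "U1 \<in> T" "z U1 > 2^c'" by auto
      have U1N: "U1 \<in> N" using U1 unfolding T_def by simp
      have z1c: "z U1 \<ge> 2^c"
      proof -
        obtain h where h: "z U1 = 2^h" using zpow[OF U1N] by blast
        have "c' < h" using U1(2) h by (metis not_less power_increasing one_le_numeral)
        then have "c \<le> h" unfolding c_def c'_def by linarith
        then show ?thesis using h by (simp add: power_increasing)
      qed
      define Phi1 where "Phi1 = {\<phi>\<in>Phi. P \<phi> U1}"
      define P1 where "P1 = int (card Phi1) + 1"
      have finPhi1: "finite Phi1" using finPhi unfolding Phi1_def by simp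
      have zP1: "z U1 * P1 = 2^n" using perp1[OF U1N] unfolding P1_def Phi1_def .
      have tau1: "tau \<phi> \<ge> D + q" if "\<phi> \<in> Phi1" for \<phi>
      proof -
        have ph: "\<phi> \<in> Phi" "P \<phi> U1" using that unfolding Phi1_def by auto
        obtain j where j: "tau \<phi> = D + q * j" using taucong[OF ph(1)] by blast
        have "tau \<phi> = z U1 + (\<Sum>U\<in>T-{U1}. if P \<phi> U then z U else 0)"
          unfolding tau_def using ph U1 finT by (simp add: sum.remove)
        moreover have "(\<Sum>U\<in>T-{U1}. if P \<phi> U then z U else 0) \<ge> 0" by (intro sum_nonneg) (auto simp: zT0)
        ultimately have "tau \<phi> > D" using z1c Dc by simp
        then have "j \<ge> 1"
        proof -
          assume "tau \<phi> > D"
          then have "q * j > 0" using j by simp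
          then show "j \<ge> 1" using q2 by (simp add: zero_less_mult_iff)
        qed
        then show ?thesis using j q2 by (simp add: mult_left_mono)
      qed
      have sum1: "(\<Sum>\<phi>\<in>Phi1. tau \<phi>) = 2^n + (t - 1) * P1 - W"
      proof -
        have "(\<Sum>\<phi>\<in>Phi1. tau \<phi>) = (\<Sum>U\<in>T. \<Sum>\<phi>\<in>Phi1. if P \<phi> U then z U else 0)"
          unfolding tau_def by (rule sum.swap)
        also have "\<dots> = (\<Sum>U\<in>T. if U = U1 then z U1 * (P1 - 1) else P1 - z U)"
        proof (rule sum.cong[OF refl])
          fix U assume U: "U \<in> T"
          have "(\<Sum>\<phi>\<in>Phi1. if P \<phi> U then z U else 0) = (\<Sum>\<phi>\<in>{\<phi>\<in>Phi1. P \<phi> U}. z U)"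
            using finPhi1 by (rule sum.inter_filter[symmetric])
          also have "\<dots> = z U * int (card {\<phi>\<in>Phi1. P \<phi> U})" by simp
          finally have e: "(\<Sum>\<phi>\<in>Phi1. if P \<phi> U then z U else 0) = z U * int (card {\<phi>\<in>Phi1. P \<phi> U})" .
          show "(\<Sum>\<phi>\<in>Phi1. if P \<phi> U then z U else 0) = (if U = U1 then z U1 * (P1 - 1) else P1 - z U)"
          proof (cases "U = U1")
            case True
            then have "{\<phi>\<in>Phi1. P \<phi> U} = Phi1" unfolding Phi1_def by auto
            then show ?thesis using e True unfolding P1_def by simp
          next
            case False
            have UN: "U \<in> N" using U unfolding T_def by simp
            have "{\<phi>\<in>Phi1. P \<phi> U} = {\<phi>\<in>Phi. P \<phi> U \<and> P \<phi> U1}" unfolding Phi1_def by auto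
            then have "z U * z U1 * (int (card {\<phi>\<in>Phi1. P \<phi> U}) + 1) = z U1 * P1"
              using perp2[OF UN U1N False] zP1 by simp
            then have "z U1 * (z U * (int (card {\<phi>\<in>Phi1. P \<phi> U}) + 1)) = z U1 * P1"
              by (simp add: algebra_simps)
            then have "z U * (int (card {\<phi>\<in>Phi1. P \<phi> U}) + 1) = P1" using zT[OF U1(1)] by simp
            then show ?thesis using e False by (simp add: algebra_simps)
          qed
        qed
        also have "\<dots> = z U1 * (P1 - 1) + (\<Sum>U\<in>T-{U1}. P1 - z U)"
          using U1 finT by (simp add: sum.remove)
        also have "(\<Sum>U\<in>T-{U1}. P1 - z U) = (t - 1) * P1 - (W - z U1)"
        proof -
          have cT: "card T = Suc (card (T - {U1}))" using card.remove[OF finT U1(1)] .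
          have "(\<Sum>U\<in>T-{U1}. P1 - z U) = int (card (T - {U1})) * P1 - (\<Sum>U\<in>T-{U1}. z U)"
            by (simp add: sum_subtractf)
          also have "(\<Sum>U\<in>T-{U1}. z U) = W - z U1" unfolding W_def using U1 finT by (simp add: sum_diff1)
          finally show ?thesis unfolding t_def using cT by (simp add: algebra_simps)
        qed
        finally show ?thesis using zP1 by (simp add: algebra_simps)
      qed
      have "(\<Sum>\<phi>\<in>Phi1. D + q) \<le> (\<Sum>\<phi>\<in>Phi1. tau \<phi>)" by (rule sum_mono) (rule tau1)
      then have ineq: "(P1 - 1) * (D + q) \<le> 2^n + (t - 1) * P1 - W" using sum1 unfolding P1_def by simp
      have P1q: "P1 \<ge> 2 * q"
      proof -
        have "(2::int)^(k+k) \<le> 2^n" by (rule power_increasing) (use kn in auto)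
        then have "q * q \<le> z U1 * P1" unfolding q_def using zP1 by (simp add: power_add)
        also have "\<dots> * 2 \<le> q * P1"
        proof -
          have "P1 \<ge> 1" unfolding P1_def by simp
          then show ?thesis using zT[OF U1(1)] by (simp add: mult.commute mult_left_mono)
        qed
        finally have "q * (2 * q) \<le> q * P1" by (simp add: algebra_simps)
        then show ?thesis using q2 by simp
      qed
      have W0: "W \<ge> 0" unfolding W_def by (intro sum_nonneg) (auto simp: zT0)
      have X: "z U1 + t - 1 - D - q \<ge> 0"
      proof (rule ccontr)
        assume "\<not> ?thesis"
        then have "P1 * (z U1 + t - 1 - D - q) \<le> P1 * (-1)" using P1q q2 by (intro mult_left_mono) auto
        then show False using ineq zP1 P1q W0 Dq by (simp add: algebra_simps)
      qed
      then have t2: "2 * t \<ge> 2 * D + q + 2" using zT[OF U1(1)] by simp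
      have "2 * (W - t) \<le> t * (q - 2)"
      proof -
        have "2 * (W - t) = (\<Sum>U\<in>T. 2 * z U - 2)" unfolding W_def t_def by (simp add: sum_subtractf sum_distrib_left)
        also have "\<dots> \<le> (\<Sum>U\<in>T. q - 2)" by (rule sum_mono) (simp add: zT(2))
        finally show ?thesis unfolding t_def by (simp add: mult.commute)
      qed
      then have "4 * (2^(k+r) - 1) \<le> 4 * (1 + D) * (q - 1) - 2 * t * q" using ptsD by (simp add: algebra_simps)
      also have "2 * t * q \<ge> (2 * D + q + 2) * q" using t2 q2 by (intro mult_right_mono) auto
      then have "4 * (1 + D) * (q - 1) - 2 * t * q \<le> (1 + D) * (2 * q - 4) - q * q" by (simp add: algebra_simps)
      also have "\<dots> \<le> 2^c * (2 * q - 4) - q * q" using Dc q2 by (intro diff_right_mono mult_right_mono) auto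
      finally have fin: "4 * (2^(k+r) - 1) \<le> 2^c * (2 * q - 4) - q * q" .
      show False
      proof (cases "c = k")
        case True
        then have e: "k + r + 1 = k + k" using rk unfolding c_def by linarith
        have "2 * (2::int)^(k+r) = 2^(k+r+1)" by simp
        also have "\<dots> = q * q" unfolding e q_def by (simp add: power_add)
        finally have e2: "2 * (2::int)^(k+r) = q * q" .
        have "(2::int)^c = q" unfolding q_def True ..
        then have "4 * (2^(k+r) - 1) \<le> q * (2 * q - 4) - q * q" using fin by simp
        moreover have "q * (2 * q - 4) = 2 * (q * q) - 4 * q" by (simp add: algebra_simps)
        moreover have "q * q \<ge> 0" by simp
        moreover have "4 * ((2::int)^(k+r) - 1) = 2 * (2 * 2^(k+r)) - 4" by simp
        ultimately show False using e2 q2 by linarith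
      next
        case False
        then have "(2::int)^(Suc c) \<le> 2^k" using ck by (intro power_increasing) auto
        then have h2: "2 * 2^c \<le> q" unfolding q_def by simp
        have "2^c * (2 * q - 4) = (2 * 2^c) * (q - 2)" by (simp add: algebra_simps)
        also have "\<dots> \<le> q * (q - 2)" using h2 q2 by (intro mult_right_mono) auto
        finally have "2^c * (2 * q - 4) \<le> q * (q - 2)" .
        moreover have "q * (q - 2) = q * q - 2 * q" by (simp add: algebra_simps)
        moreover have "4 * ((2::int)^(k+r) - 1) = 4 * 2^(k+r) - 4" by simp
        ultimately show False using fin kr q2 by linarith
      qed
    qed
  qed
qed



definition sg :: "bool \<Rightarrow> int" where "sg P = (if P then -1 else 1)"

lemma sg_xor: "sg (P \<noteq> Q) = sg P * sg Q" by (auto simp: sg_def)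
lemma sg_inj: "sg P = sg Q \<Longrightarrow> P = Q" by (auto simp: sg_def split: if_splits)
lemma sg_sq: "sg P * sg P = 1" by (auto simp: sg_def)
lemma sg_False[simp]: "sg False = 1" by (simp add: sg_def)
lemma sg_True[simp]: "sg True = -1" by (simp add: sg_def)
lemma sg_not: "sg (\<not> P) = - sg P" by (simp add: sg_def)
lemma pow_sg: "(-1::int) ^ (if P then 1 else 0) = sg P" by (simp add: sg_def)

lemma dvd_pow2: "(d::nat) dvd 2^m \<Longrightarrow> \<exists>h. d = 2^h"
proof (induction m arbitrary: d)
  case 0 then show ?case by (intro exI[of _ 0]) simp
next
  case (Suc m)
  show ?case
  proof (cases "even d")
    case True
    then obtain d' where d': "d = 2 * d'" by blast
    then have "d' dvd 2^m" using Suc.prems by simp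
    then obtain h where "d' = 2^h" using Suc.IH by blast
    then show ?thesis using d' by (intro exI[of _ "Suc h"]) simp
  next
    case False
    then have "coprime d 2" by simp
    then have "d dvd 2^m" using Suc.prems by (simp add: coprime_dvd_mult_right_iff)
    then show ?thesis using Suc.IH by blast
  qed
qed

section \<open>Vectors\<close>

lemma vecs_len[simp]: "x \<in> vecs n \<longleftrightarrow> length x = n" by (simp add: vecs_def)
lemma vadd_len[simp]: "length (vadd x y) = min (length x) (length y)" by (simp add: vadd_def)
lemma vadd_nth[simp]: "i < length x \<Longrightarrow> i < length y \<Longrightarrow> vadd x y ! i = (x!i \<noteq> y!i)"
  by (simp add: vadd_def)
lemma vzero_len[simp]: "length (vzero n) = n" by (simp add: vzero_def)
lemma vzero_nth[simp]: "i < n \<Longrightarrow> vzero n ! i = False" by (simp add: vzero_def)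
lemma vadd_in[simp]: "x \<in> vecs n \<Longrightarrow> y \<in> vecs n \<Longrightarrow> vadd x y \<in> vecs n" by simp
lemma vzero_in[simp]: "vzero n \<in> vecs n" by simp

lemma vec_eqI: "length x = n \<Longrightarrow> length y = n \<Longrightarrow> (\<And>i. i < n \<Longrightarrow> x!i = y!i) \<Longrightarrow> x = y"
  by (rule nth_equalityI) auto

lemma vadd_comm: "vadd x y = vadd y x"
  unfolding vadd_def by (rule nth_equalityI) auto
lemma vadd_assoc: "length x = n \<Longrightarrow> length y = n \<Longrightarrow> length z = n \<Longrightarrow> vadd (vadd x y) z = vadd x (vadd y z)"
  by (rule vec_eqI[of _ n]) auto
lemma vadd_self[simp]: "length x = n \<Longrightarrow> vadd x x = vzero n"
  by (rule vec_eqI[of _ n]) auto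
lemma vadd_zero[simp]: "length x = n \<Longrightarrow> vadd x (vzero n) = x"
  by (rule vec_eqI[of _ n]) auto
lemma vadd_zero_left[simp]: "length x = n \<Longrightarrow> vadd (vzero n) x = x"
  by (rule vec_eqI[of _ n]) auto
lemma vadd_cancel: "length x = n \<Longrightarrow> length y = n \<Longrightarrow> vadd (vadd x y) y = x"
  by (rule vec_eqI[of _ n]) auto
lemma vadd_eq_zero: "length x = n \<Longrightarrow> length y = n \<Longrightarrow> vadd x y = vzero n \<longleftrightarrow> x = y"
proof
  assume l: "length x = n" "length y = n" and e: "vadd x y = vzero n"
  show "x = y"
  proof (rule vec_eqI[of _ n])
    fix i assume i: "i < n"
    have "vadd x y ! i = vzero n ! i" using e by simp
    then show "x ! i = y ! i" using i l by simp
  qed (use l in auto)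
qed simp

lemma finite_vecs[simp]: "finite (vecs n)"
proof -
  have "vecs n = {xs. set xs \<subseteq> (UNIV::bool set) \<and> length xs = n}" by (auto simp: vecs_def)
  then show ?thesis using finite_lists_length_eq[of "UNIV::bool set" n] by simp
qed
lemma card_vecs: "card (vecs n) = 2^n"
proof -
  have "vecs n = {xs. set xs \<subseteq> (UNIV::bool set) \<and> length xs = n}" by (auto simp: vecs_def)
  then show ?thesis using card_lists_length_eq[of "UNIV::bool set" n] by simp
qed

section \<open>Dot product\<close>

lemma odd_diff_aux: "(y::nat) \<le> x \<Longrightarrow> a + b = x + y \<Longrightarrow> odd (x - y) = (odd a \<noteq> odd b)"
proof -
  assume h: "y \<le> x" "a + b = x + y"
  then have "x - y + 2 * y = a + b" by simp
  then have "odd (x - y) = odd (a + b)" by (metis odd_add even_mult_iff even_numeral)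
  then show ?thesis by simp
qed

lemma odd_card_symdiff: "finite A \<Longrightarrow> finite B \<Longrightarrow>
   odd (card ((A - B) \<union> (B - A))) = (odd (card A) \<noteq> odd (card B))"
proof -
  assume fA: "finite A" and fB: "finite B"
  have e: "(A - B) \<union> (B - A) = (A \<union> B) - (A \<inter> B)" by blast
  have "card ((A \<union> B) - (A \<inter> B)) = card (A \<union> B) - card (A \<inter> B)"
    by (rule card_Diff_subset) (use fA in auto)
  moreover have "card (A \<inter> B) \<le> card (A \<union> B)" by (rule card_mono) (use fA fB in auto)
  moreover have "card A + card B = card (A \<union> B) + card (A \<inter> B)" by (rule card_Un_Int[OF fA fB])
  ultimately show ?thesis unfolding e using odd_diff_aux by metis
qed

lemma dotp_comm: "dotp x y = dotp y x"
proof -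
  have "{i. i < length x \<and> i < length y \<and> x ! i \<and> y ! i} = {i. i < length y \<and> i < length x \<and> y ! i \<and> x ! i}"
    by blast
  then show ?thesis unfolding dotp_def by simp
qed

lemma dotp_add: "length b = n \<Longrightarrow> length x = n \<Longrightarrow> length y = n \<Longrightarrow>
   dotp b (vadd x y) = (dotp b x \<noteq> dotp b y)"
proof -
  assume l: "length b = n" "length x = n" "length y = n"
  define A where "A = {i. i < n \<and> b!i \<and> x!i}"
  define B where "B = {i. i < n \<and> b!i \<and> y!i}"
  have e: "{i. i < length b \<and> i < length (vadd x y) \<and> b!i \<and> vadd x y ! i} = (A - B) \<union> (B - A)"
  proof (rule set_eqI)
    fix i
    show "i \<in> {i. i < length b \<and> i < length (vadd x y) \<and> b!i \<and> vadd x y ! i} \<longleftrightarrow> i \<in> (A - B) \<union> (B - A)"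
    proof (cases "i < n")
      case True
      then show ?thesis using l unfolding A_def B_def by auto
    next
      case False
      then show ?thesis using l unfolding A_def B_def by simp
    qed
  qed
  have dx: "dotp b x = odd (card A)" unfolding dotp_def A_def using l by simp
  have dy: "dotp b y = odd (card B)" unfolding dotp_def B_def using l by simp
  have fAB: "finite A" "finite B" unfolding A_def B_def by auto
  have "dotp b (vadd x y) = odd (card ((A - B) \<union> (B - A)))" unfolding dotp_def e ..
  also have "\<dots> = (odd (card A) \<noteq> odd (card B))" by (rule odd_card_symdiff[OF fAB])
  finally show ?thesis using dx dy by simp
qed

lemma dotp_add_left: "length b = n \<Longrightarrow> length x = n \<Longrightarrow> length y = n \<Longrightarrow>
   dotp (vadd x y) b = (dotp x b \<noteq> dotp y b)"
  using dotp_add dotp_comm by metis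

lemma dotp_zero[simp]: "dotp (vzero n) x = False" "dotp x (vzero n) = False"
proof -
  have e1: "{i. i < length (vzero n) \<and> i < length x \<and> vzero n ! i \<and> x ! i} = {}" by auto
  show "dotp (vzero n) x = False" unfolding dotp_def e1 by simp
  have e2: "{i. i < length x \<and> i < length (vzero n) \<and> x ! i \<and> vzero n ! i} = {}" by auto
  show "dotp x (vzero n) = False" unfolding dotp_def e2 by simp
qed

definition unitv :: "nat \<Rightarrow> nat \<Rightarrow> bool list" where "unitv n i = (vzero n)[i := True]"

lemma unitv_in[simp]: "unitv n i \<in> vecs n" by (simp add: unitv_def)

lemma dotp_unitv: "i < n \<Longrightarrow> length x = n \<Longrightarrow> dotp (unitv n i) x = x ! i"
proof -
  assume i: "i < n" and l: "length x = n"
  have "{j. j < length (unitv n i) \<and> j < length x \<and> unitv n i ! j \<and> x ! j} = (if x!i then {i} else {})"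
    using i l by (auto simp: unitv_def nth_list_update)
  then show ?thesis unfolding dotp_def by simp
qed

lemma vec_zero_if_perp: "length x = n \<Longrightarrow> (\<And>b. b \<in> vecs n \<Longrightarrow> \<not> dotp b x) \<Longrightarrow> x = vzero n"
proof (rule vec_eqI[of _ n])
  fix i assume "length x = n" "\<And>b. b \<in> vecs n \<Longrightarrow> \<not> dotp b x" "i < n"
  then show "x ! i = vzero n ! i" using dotp_unitv[of i n x] unitv_in[of n i] by auto
qed auto

section \<open>Character sums\<close>

lemma sum_involution_zero:
  fixes f :: "'a \<Rightarrow> int"
  assumes "\<And>x. x \<in> X \<Longrightarrow> g x \<in> X" "\<And>x. x \<in> X \<Longrightarrow> g (g x) = x" "\<And>x. x \<in> X \<Longrightarrow> f (g x) = - f x"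
  shows "sum f X = 0"
proof -
  have "sum f X = sum (\<lambda>x. f (g x)) X"
    by (rule sum.reindex_bij_witness[of _ g g]) (use assms in auto)
  also have "\<dots> = - sum f X" using assms(3) by (simp add: sum_negf)
  finally show ?thesis by simp
qed

definition subsp :: "nat \<Rightarrow> bool list set \<Rightarrow> bool" where
  "subsp n X \<longleftrightarrow> X \<subseteq> vecs n \<and> vzero n \<in> X \<and> (\<forall>x\<in>X. \<forall>y\<in>X. vadd x y \<in> X)"

lemma subsp_V: "subsp n (vecs n)" by (simp add: subsp_def)

lemma lin_sum:
  assumes X: "subsp n X"
    and g: "\<And>x y. x \<in> X \<Longrightarrow> y \<in> X \<Longrightarrow> g (vadd x y) = (g x \<noteq> g y)"
  shows "(\<Sum>x\<in>X. sg (g x)) = (if \<forall>x\<in>X. \<not> g x then int (card X) else 0)"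
proof (cases "\<forall>x\<in>X. \<not> g x")
  case True
  then show ?thesis by simp
next
  case False
  then obtain x0 where x0: "x0 \<in> X" "g x0" by blast
  have XV: "X \<subseteq> vecs n" using X by (simp add: subsp_def)
  have "(\<Sum>x\<in>X. sg (g x)) = 0"
  proof (rule sum_involution_zero[where g="\<lambda>x. vadd x x0"])
    fix x assume x: "x \<in> X"
    show "vadd x x0 \<in> X" using X x x0 by (simp add: subsp_def)
    show "vadd (vadd x x0) x0 = x" using XV x x0 by (intro vadd_cancel[of _ n]) auto
    show "sg (g (vadd x x0)) = - sg (g x)" using g[OF x x0(1)] x0(2) by (simp add: sg_def)
  qed
  moreover have "\<not> (\<forall>x\<in>X. \<not> g x)" using x0 by blast
  ultimately show ?thesis by (simp only: if_False)
qed

lemma char_sum: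
  assumes "x \<in> vecs n"
  shows "(\<Sum>\<phi>\<in>vecs n. sg (dotp \<phi> x)) = (if x = vzero n then 2^n else 0)"
proof -
  have "(\<Sum>\<phi>\<in>vecs n. sg (dotp \<phi> x)) = (if \<forall>\<phi>\<in>vecs n. \<not> dotp \<phi> x then int (card (vecs n)) else 0)"
    by (rule lin_sum[OF subsp_V]) (use assms dotp_add_left in auto)
  moreover have "(\<forall>\<phi>\<in>vecs n. \<not> dotp \<phi> x) \<longleftrightarrow> x = vzero n"
  proof
    assume "\<forall>\<phi>\<in>vecs n. \<not> dotp \<phi> x"
    then show "x = vzero n" using vec_zero_if_perp[of x n] assms by auto
  next
    assume "x = vzero n"
    then show "\<forall>\<phi>\<in>vecs n. \<not> dotp \<phi> x" by simp
  qed
  ultimately show ?thesis by (simp add: card_vecs)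
qed

lemma vadd_twice: "length a = n \<Longrightarrow> length y = n \<Longrightarrow> vadd a (vadd a y) = y"
  using vadd_assoc[of a n a y] by simp

lemma sum_translate:
  assumes "a \<in> vecs n"
  shows "(\<Sum>y\<in>vecs n. f y) = (\<Sum>u\<in>vecs n. f (vadd a u))"
proof (rule sum.reindex_bij_witness[of _ "\<lambda>y. vadd a y" "\<lambda>y. vadd a y"])
  fix y assume y: "y \<in> vecs n"
  show "vadd a (vadd a y) = y" using assms y by (intro vadd_twice[of _ n]) auto
  show "vadd a y \<in> vecs n" using assms y by simp
  show "f (vadd a (vadd a y)) = f y" using assms y vadd_twice[of a n y] by simp
next
  fix y assume y: "y \<in> vecs n"
  show "vadd a (vadd a y) = y" using assms y by (intro vadd_twice[of _ n]) auto
  show "vadd a y \<in> vecs n" using assms y by simp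
qed




definition Bf :: "nat \<Rightarrow> (bool list \<Rightarrow> bool) \<Rightarrow> bool list \<Rightarrow> bool list \<Rightarrow> bool" where
  "Bf n f x u = ((f (vadd x u) \<noteq> f x) \<noteq> (f u \<noteq> f (vzero n)))"

definition addB :: "nat \<Rightarrow> (bool list \<Rightarrow> bool) \<Rightarrow> bool" where
  "addB n f \<longleftrightarrow> (\<forall>x\<in>vecs n. \<forall>y\<in>vecs n. \<forall>u\<in>vecs n. Bf n f (vadd x y) u = (Bf n f x u \<noteq> Bf n f y u))"

definition cfi :: "nat \<Rightarrow> (bool list \<Rightarrow> int) \<Rightarrow> bool" where
  "cfi n e \<longleftrightarrow> (\<forall>x\<in>vecs n. \<forall>y\<in>vecs n. \<forall>u\<in>vecs n.
     e (vadd (vadd x y) u) * e (vadd x y) * e u * e (vzero n) =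
     (e (vadd x u) * e x * e u * e (vzero n)) * (e (vadd y u) * e y * e u * e (vzero n)))"

lemma sg_eq_not: "sg (P = (\<not> Q)) = sg P * sg Q" by (auto simp: sg_def)

lemma sg_Bf: "sg (Bf n f x u) = sg (f (vadd x u)) * sg (f x) * (sg (f u) * sg (f (vzero n)))"
  unfolding Bf_def sg_xor by (rule refl)

lemma cfi_addB: "cfi n (\<lambda>x. sg (f x)) \<Longrightarrow> addB n f"
  unfolding addB_def
proof (intro ballI)
  fix x y u assume c: "cfi n (\<lambda>x. sg (f x))" and xyu: "x \<in> vecs n" "y \<in> vecs n" "u \<in> vecs n"
  have "sg (Bf n f (vadd x y) u) = sg (Bf n f x u) * sg (Bf n f y u)"
    using c xyu unfolding cfi_def sg_Bf by (simp add: mult.assoc)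
  then have "sg (Bf n f (vadd x y) u) = sg (Bf n f x u \<noteq> Bf n f y u)" unfolding sg_xor .
  then show "Bf n f (vadd x y) u = (Bf n f x u \<noteq> Bf n f y u)" by (rule sg_inj)
qed

lemma cfi_mult:
  assumes "cfi n e1" "cfi n e2" shows "cfi n (\<lambda>x. e1 x * e2 x)"
  unfolding cfi_def
proof (intro ballI)
  fix x y u assume xyu: "x \<in> vecs n" "y \<in> vecs n" "u \<in> vecs n"
  have A: "e1 (vadd (vadd x y) u) * e1 (vadd x y) * e1 u * e1 (vzero n) =
     (e1 (vadd x u) * e1 x * e1 u * e1 (vzero n)) * (e1 (vadd y u) * e1 y * e1 u * e1 (vzero n))"
    using assms(1) xyu unfolding cfi_def by blast
  have B: "e2 (vadd (vadd x y) u) * e2 (vadd x y) * e2 u * e2 (vzero n) =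
     (e2 (vadd x u) * e2 x * e2 u * e2 (vzero n)) * (e2 (vadd y u) * e2 y * e2 u * e2 (vzero n))"
    using assms(2) xyu unfolding cfi_def by blast
  have "e1 (vadd (vadd x y) u) * e2 (vadd (vadd x y) u) * (e1 (vadd x y) * e2 (vadd x y)) * (e1 u * e2 u) * (e1 (vzero n) * e2 (vzero n))
      = (e1 (vadd (vadd x y) u) * e1 (vadd x y) * e1 u * e1 (vzero n)) * (e2 (vadd (vadd x y) u) * e2 (vadd x y) * e2 u * e2 (vzero n))"
    by (simp only: mult_ac)
  also have "\<dots> = ((e1 (vadd x u) * e1 x * e1 u * e1 (vzero n)) * (e1 (vadd y u) * e1 y * e1 u * e1 (vzero n))) *
      ((e2 (vadd x u) * e2 x * e2 u * e2 (vzero n)) * (e2 (vadd y u) * e2 y * e2 u * e2 (vzero n)))"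
    unfolding A B by (rule refl)
  also have "\<dots> = (e1 (vadd x u) * e2 (vadd x u) * (e1 x * e2 x) * (e1 u * e2 u) * (e1 (vzero n) * e2 (vzero n))) *
       (e1 (vadd y u) * e2 (vadd y u) * (e1 y * e2 y) * (e1 u * e2 u) * (e1 (vzero n) * e2 (vzero n)))"
    by (simp only: mult_ac)
  finally show "e1 (vadd (vadd x y) u) * e2 (vadd (vadd x y) u) * (e1 (vadd x y) * e2 (vadd x y)) * (e1 u * e2 u) * (e1 (vzero n) * e2 (vzero n))
      = (e1 (vadd x u) * e2 (vadd x u) * (e1 x * e2 x) * (e1 u * e2 u) * (e1 (vzero n) * e2 (vzero n))) *
       (e1 (vadd y u) * e2 (vadd y u) * (e1 y * e2 y) * (e1 u * e2 u) * (e1 (vzero n) * e2 (vzero n)))" .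
qed

lemma cfi_one: "cfi n (\<lambda>x. 1)" unfolding cfi_def by simp

lemma cfi_sgconst: "cfi n (\<lambda>x. sg e)" unfolding cfi_def by (cases e) simp_all

lemma bool_mono8: "sg (((a \<noteq> b) \<noteq> c) \<and> ((a' \<noteq> b') \<noteq> c')) * sg ((a \<noteq> b) \<and> (a' \<noteq> b')) * sg (c \<and> c') * sg (False \<and> False) =
   (sg ((a \<noteq> c) \<and> (a' \<noteq> c')) * sg (a \<and> a') * sg (c \<and> c') * sg (False \<and> False)) *
   (sg ((b \<noteq> c) \<and> (b' \<noteq> c')) * sg (b \<and> b') * sg (c \<and> c') * sg (False \<and> False))"
  by (cases a; cases b; cases c; cases a'; cases b'; cases c'; simp)

lemma cfi_mono: assumes "i < n" "j < n" shows "cfi n (\<lambda>x. sg (x!i \<and> x!j))"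
  unfolding cfi_def
proof (intro ballI)
  fix x y u assume xyu: "x \<in> vecs n" "y \<in> vecs n" "u \<in> vecs n"
  then show "sg (vadd (vadd x y) u ! i \<and> vadd (vadd x y) u ! j) * sg (vadd x y ! i \<and> vadd x y ! j) * sg (u ! i \<and> u ! j) * sg (vzero n ! i \<and> vzero n ! j) =
    sg (vadd x u ! i \<and> vadd x u ! j) * sg (x ! i \<and> x ! j) * sg (u ! i \<and> u ! j) * sg (vzero n ! i \<and> vzero n ! j) *
    (sg (vadd y u ! i \<and> vadd y u ! j) * sg (y ! i \<and> y ! j) * sg (u ! i \<and> u ! j) * sg (vzero n ! i \<and> vzero n ! j))"
    using assms bool_mono8[of "x!i" "y!i" "u!i" "x!j" "y!j" "u!j"] by simp
qed

lemma cfi_prod: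
  assumes "finite P" "\<And>p. p \<in> P \<Longrightarrow> cfi n (e p)"
  shows "cfi n (\<lambda>x. \<Prod>p\<in>P. e p x)"
  using assms
proof (induction P rule: finite_induct)
  case empty then show ?case by (simp add: cfi_one)
next
  case (insert p P)
  then have "cfi n (\<lambda>x. e p x * (\<Prod>p\<in>P. e p x))" by (intro cfi_mult) auto
  then show ?case using insert by simp
qed

lemma cfi_cong: "cfi n e \<Longrightarrow> (\<And>x. x \<in> vecs n \<Longrightarrow> e x = e' x) \<Longrightarrow> cfi n e'"
  unfolding cfi_def by simp

lemma sg_odd_card: "finite P \<Longrightarrow> sg (odd (card {p\<in>P. Q p})) = (\<Prod>p\<in>P. sg (Q p))"
proof (induction P rule: finite_induct)
  case empty then show ?case by simp
next
  case (insert p P)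
  show ?case
  proof (cases "Q p")
    case True
    then have "{p'\<in>insert p P. Q p'} = insert p {p'\<in>P. Q p'}" by auto
    moreover have "p \<notin> {p'\<in>P. Q p'}" using insert by simp
    moreover have "finite {p'\<in>P. Q p'}" using insert by simp
    ultimately have "card {p'\<in>insert p P. Q p'} = Suc (card {p'\<in>P. Q p'})" by simp
    then have "sg (odd (card {p'\<in>insert p P. Q p'})) = - sg (odd (card {p'\<in>P. Q p'}))"
      by (simp add: sg_def)
    also have "\<dots> = sg (Q p) * (\<Prod>p\<in>P. sg (Q p))" using insert.IH True by simp
    also have "\<dots> = (\<Prod>p\<in>insert p P. sg (Q p))" using insert.hyps by simp
    finally show ?thesis .
  next
    case False
    then have "{p'\<in>insert p P. Q p'} = {p'\<in>P. Q p'}" by auto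
    then show ?thesis using insert False by simp
  qed
qed

lemma quad_sg:
  "sg (quad_form n c x) = (\<Prod>p\<in>{(i,j). i \<le> j \<and> j < n \<and> c i j}. sg (x ! fst p \<and> x ! snd p))"
proof -
  have fin: "finite {(i,j). i \<le> j \<and> j < n \<and> c i j}"
    by (rule finite_subset[of _ "{..<n} \<times> {..<n}"]) auto
  have "{(i,j). i \<le> j \<and> j < n \<and> c i j \<and> x ! i \<and> x ! j} = {p\<in>{(i,j). i \<le> j \<and> j < n \<and> c i j}. x ! fst p \<and> x ! snd p}"
    by auto
  then show ?thesis unfolding quad_form_def using sg_odd_card[OF fin] by simp
qed

lemma aff_sg:
  "sg (affine_fun n a e x) = sg e * (\<Prod>i\<in>{i. i < n \<and> a i}. sg (x ! i))"
proof -
  have fin: "finite {i. i < n \<and> a i}" by simp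
  have e1: "{i. i < n \<and> a i \<and> x ! i} = {i\<in>{i. i < n \<and> a i}. x ! i}" by auto
  have "sg (affine_fun n a e x) = sg (odd (card {i\<in>{i. i < n \<and> a i}. x ! i})) * sg e"
    unfolding affine_fun_def sg_xor e1 ..
  then show ?thesis unfolding sg_odd_card[OF fin] by (simp add: mult.commute)
qed

lemma cfi_mono1: "i < n \<Longrightarrow> cfi n (\<lambda>x. sg (x!i))"
  using cfi_mono[of i n i] by simp

lemma comp_addB:
  assumes q: "is_quadratic n F" and b: "b \<in> vecs n"
  shows "addB n (component F b)"
proof -
  obtain c a e where ca: "\<forall>x\<in>vecs n. component F b x = (quad_form n c x \<noteq> affine_fun n a e x)"
    using q b unfolding is_quadratic_def by blast
  define PQ where "PQ = {(i,j). i \<le> j \<and> j < n \<and> c i j}"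
  define PA where "PA = {i. i < n \<and> a i}"
  have finPQ: "finite PQ" unfolding PQ_def by (rule finite_subset[of _ "{..<n} \<times> {..<n}"]) auto
  have c1: "cfi n (\<lambda>x. \<Prod>p\<in>PQ. sg (x ! fst p \<and> x ! snd p))"
    by (rule cfi_prod[OF finPQ]) (auto simp: PQ_def intro!: cfi_mono)
  have c2: "cfi n (\<lambda>x. \<Prod>i\<in>PA. sg (x ! i))"
    by (rule cfi_prod) (auto simp: PA_def intro!: cfi_mono1)
  have c3: "cfi n (\<lambda>x. (\<Prod>p\<in>PQ. sg (x ! fst p \<and> x ! snd p)) * (sg e * (\<Prod>i\<in>PA. sg (x ! i))))"
    by (intro cfi_mult c1 c2 cfi_sgconst)
  have "cfi n (\<lambda>x. sg (component F b x))"
  proof (rule cfi_cong[OF c3])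
    fix x assume "x \<in> vecs n"
    then have "component F b x = (quad_form n c x \<noteq> affine_fun n a e x)" using ca by blast
    then have "sg (component F b x) = sg (quad_form n c x) * sg (affine_fun n a e x)"
      by (simp add: sg_eq_not)
    then show "(\<Prod>p\<in>PQ. sg (x ! fst p \<and> x ! snd p)) * (sg e * (\<Prod>i\<in>PA. sg (x ! i))) = sg (component F b x)"
      unfolding PQ_def PA_def quad_sg aff_sg by simp
  qed
  then show ?thesis by (rule cfi_addB)
qed




definition Rad :: "nat \<Rightarrow> (bool list \<Rightarrow> bool) \<Rightarrow> bool list set" where
  "Rad n f = {u \<in> vecs n. \<forall>x\<in>vecs n. \<not> Bf n f x u}"

lemma Bf_sym: "Bf n f x u = Bf n f u x"
  unfolding Bf_def by (auto simp: vadd_comm)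

lemma Rad_sub: "Rad n f \<subseteq> vecs n" unfolding Rad_def by auto

lemma Rad_subsp: assumes "addB n f" shows "subsp n (Rad n f)"
  unfolding subsp_def
proof (intro conjI ballI)
  show "Rad n f \<subseteq> vecs n" by (rule Rad_sub)
  show "vzero n \<in> Rad n f" unfolding Rad_def Bf_def by simp
  fix u v assume u: "u \<in> Rad n f" and v: "v \<in> Rad n f"
  have uv: "u \<in> vecs n" "v \<in> vecs n" using u v unfolding Rad_def by auto
  have "\<not> Bf n f x (vadd u v)" if x: "x \<in> vecs n" for x
  proof -
    have "Bf n f x (vadd u v) = Bf n f (vadd u v) x" by (rule Bf_sym)
    also have "\<dots> = (Bf n f u x \<noteq> Bf n f v x)" using assms uv x unfolding addB_def by blast
    also have "\<dots> = (Bf n f x u \<noteq> Bf n f x v)" using Bf_sym by metis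
    finally show ?thesis using u v x unfolding Rad_def by auto
  qed
  then show "vadd u v \<in> Rad n f" using uv unfolding Rad_def by auto
qed

lemma sumB:
  assumes "addB n f" "u \<in> vecs n"
  shows "(\<Sum>x\<in>vecs n. sg (Bf n f x u)) = (if u \<in> Rad n f then 2^n else 0)"
proof -
  have "(\<Sum>x\<in>vecs n. sg (Bf n f x u)) = (if \<forall>x\<in>vecs n. \<not> Bf n f x u then int (card (vecs n)) else 0)"
    by (rule lin_sum[OF subsp_V]) (use assms in \<open>auto simp: addB_def\<close>)
  then show ?thesis using assms(2) unfolding Rad_def by (simp add: card_vecs)
qed

definition wal :: "nat \<Rightarrow> (bool list \<Rightarrow> bool) \<Rightarrow> bool list \<Rightarrow> int" where
  "wal n f a = (\<Sum>x\<in>vecs n. sg (f x \<noteq> dotp x a))"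

lemma wal_point:
  assumes "x \<in> vecs n" "u \<in> vecs n" "a \<in> vecs n"
  shows "sg (f x \<noteq> dotp x a) * sg (f (vadd x u) \<noteq> dotp (vadd x u) a) =
         sg (Bf n f x u) * sg ((f u \<noteq> f (vzero n)) \<noteq> dotp u a)"
proof -
  have d: "dotp (vadd x u) a = (dotp x a \<noteq> dotp u a)" using assms by (intro dotp_add_left[of _ n]) auto
  have "sg (f x \<noteq> dotp x a) * sg (f (vadd x u) \<noteq> dotp (vadd x u) a) =
        sg ((f x \<noteq> dotp x a) \<noteq> (f (vadd x u) \<noteq> dotp (vadd x u) a))" by (simp only: sg_xor)
  also have "\<dots> = sg (Bf n f x u \<noteq> ((f u \<noteq> f (vzero n)) \<noteq> dotp u a))"
    unfolding d Bf_def by (rule arg_cong[where f=sg]) auto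
  also have "\<dots> = sg (Bf n f x u) * sg ((f u \<noteq> f (vzero n)) \<noteq> dotp u a)" by (simp only: sg_xor)
  finally show ?thesis .
qed

lemma wal_sq:
  assumes f: "addB n f" and a: "a \<in> vecs n"
  shows "(wal n f a)^2 = 2^n * (\<Sum>u\<in>Rad n f. sg ((f u \<noteq> f (vzero n)) \<noteq> dotp u a))"
proof -
  define h where "h u = sg ((f u \<noteq> f (vzero n)) \<noteq> dotp u a)" for u
  have "(wal n f a)^2 = (\<Sum>x\<in>vecs n. \<Sum>y\<in>vecs n. sg (f x \<noteq> dotp x a) * sg (f y \<noteq> dotp y a))"
    unfolding wal_def power2_eq_square by (rule sum_product)
  also have "\<dots> = (\<Sum>x\<in>vecs n. \<Sum>u\<in>vecs n. sg (Bf n f x u) * h u)"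
  proof (rule sum.cong[OF refl])
    fix x assume x: "x \<in> vecs n"
    have "(\<Sum>y\<in>vecs n. sg (f x \<noteq> dotp x a) * sg (f y \<noteq> dotp y a)) =
          (\<Sum>u\<in>vecs n. sg (f x \<noteq> dotp x a) * sg (f (vadd x u) \<noteq> dotp (vadd x u) a))"
      by (rule sum_translate[OF x])
    also have "\<dots> = (\<Sum>u\<in>vecs n. sg (Bf n f x u) * h u)"
      unfolding h_def by (rule sum.cong[OF refl]) (rule wal_point[OF x _ a])
    finally show "(\<Sum>y\<in>vecs n. sg (f x \<noteq> dotp x a) * sg (f y \<noteq> dotp y a)) = (\<Sum>u\<in>vecs n. sg (Bf n f x u) * h u)" .
  qed
  also have "\<dots> = (\<Sum>u\<in>vecs n. \<Sum>x\<in>vecs n. sg (Bf n f x u) * h u)" by (rule sum.swap)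
  also have "\<dots> = (\<Sum>u\<in>vecs n. (\<Sum>x\<in>vecs n. sg (Bf n f x u)) * h u)" by (simp add: sum_distrib_right)
  also have "\<dots> = (\<Sum>u\<in>vecs n. if u \<in> Rad n f then 2^n * h u else 0)"
    by (rule sum.cong[OF refl]) (simp add: sumB[OF f])
  also have "\<dots> = (\<Sum>u\<in>vecs n \<inter> Rad n f. 2^n * h u)" by (rule sum.inter_restrict[symmetric]) simp
  also have "vecs n \<inter> Rad n f = Rad n f" using Rad_sub by blast
  finally show ?thesis unfolding h_def by (simp add: sum_distrib_left)
qed

lemma rad_sum:
  assumes f: "addB n f" and a: "a \<in> vecs n"
  shows "(\<Sum>u\<in>Rad n f. sg ((f u \<noteq> f (vzero n)) \<noteq> dotp u a)) =
    (if \<forall>u\<in>Rad n f. \<not> ((f u \<noteq> f (vzero n)) \<noteq> dotp u a) then int (card (Rad n f)) else 0)"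
proof (rule lin_sum[OF Rad_subsp[OF f]])
  fix u v assume u: "u \<in> Rad n f" and v: "v \<in> Rad n f"
  have uv: "u \<in> vecs n" "v \<in> vecs n" using u v unfolding Rad_def by auto
  have B: "\<not> Bf n f u v" using u v uv unfolding Rad_def by auto
  have d: "dotp (vadd u v) a = (dotp u a \<noteq> dotp v a)" using uv a by (intro dotp_add_left[of _ n]) auto
  show "((f (vadd u v) \<noteq> f (vzero n)) \<noteq> dotp (vadd u v) a) =
        (((f u \<noteq> f (vzero n)) \<noteq> dotp u a) \<noteq> ((f v \<noteq> f (vzero n)) \<noteq> dotp v a))"
    using B unfolding d Bf_def by auto
qed

lemma wal_vals:
  assumes f: "addB n f" and a: "a \<in> vecs n"
  shows "(wal n f a)^2 = 0 \<or> (wal n f a)^2 = 2^n * int (card (Rad n f))"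
  using wal_sq[OF f a] rad_sum[OF f a] by (cases "\<forall>u\<in>Rad n f. \<not> ((f u \<noteq> f (vzero n)) \<noteq> dotp u a)") auto

lemma parseval:
  assumes f: "addB n f"
  shows "(\<Sum>a\<in>vecs n. (wal n f a)^2) = 2^n * 2^n"
proof -
  have fR: "finite (Rad n f)" by (rule finite_subset[OF Rad_sub]) simp
  have 0: "vzero n \<in> Rad n f" using Rad_subsp[OF f] unfolding subsp_def by blast
  have "(\<Sum>a\<in>vecs n. (wal n f a)^2) = (\<Sum>a\<in>vecs n. 2^n * (\<Sum>u\<in>Rad n f. sg (f u \<noteq> f (vzero n)) * sg (dotp a u)))"
  proof (rule sum.cong[OF refl])
    fix a assume a: "a \<in> vecs n"
    show "(wal n f a)^2 = 2^n * (\<Sum>u\<in>Rad n f. sg (f u \<noteq> f (vzero n)) * sg (dotp a u))"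
      unfolding wal_sq[OF f a] by (simp only: sg_xor dotp_comm[of a])
  qed
  also have "\<dots> = 2^n * (\<Sum>u\<in>Rad n f. sg (f u \<noteq> f (vzero n)) * (\<Sum>a\<in>vecs n. sg (dotp a u)))"
  proof -
    have "(\<Sum>a\<in>vecs n. 2^n * (\<Sum>u\<in>Rad n f. sg (f u \<noteq> f (vzero n)) * sg (dotp a u))) =
          2^n * (\<Sum>a\<in>vecs n. \<Sum>u\<in>Rad n f. sg (f u \<noteq> f (vzero n)) * sg (dotp a u))"
      by (rule sum_distrib_left[symmetric])
    also have "(\<Sum>a\<in>vecs n. \<Sum>u\<in>Rad n f. sg (f u \<noteq> f (vzero n)) * sg (dotp a u)) =
          (\<Sum>u\<in>Rad n f. \<Sum>a\<in>vecs n. sg (f u \<noteq> f (vzero n)) * sg (dotp a u))" by (rule sum.swap)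
    also have "\<dots> = (\<Sum>u\<in>Rad n f. sg (f u \<noteq> f (vzero n)) * (\<Sum>a\<in>vecs n. sg (dotp a u)))"
      by (rule sum.cong[OF refl]) (rule sum_distrib_left[symmetric])
    finally show ?thesis .
  qed
  also have "\<dots> = 2^n * (\<Sum>u\<in>Rad n f. if u = vzero n then sg (f u \<noteq> f (vzero n)) * 2^n else 0)"
  proof -
    have "(\<Sum>u\<in>Rad n f. sg (f u \<noteq> f (vzero n)) * (\<Sum>a\<in>vecs n. sg (dotp a u))) =
          (\<Sum>u\<in>Rad n f. if u = vzero n then sg (f u \<noteq> f (vzero n)) * 2^n else 0)"
    proof (rule sum.cong[OF refl])
      fix u assume "u \<in> Rad n f"
      then have "u \<in> vecs n" using Rad_sub by blast
      then show "sg (f u \<noteq> f (vzero n)) * (\<Sum>a\<in>vecs n. sg (dotp a u)) = (if u = vzero n then sg (f u \<noteq> f (vzero n)) * 2^n else 0)"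
        by (simp add: char_sum)
    qed
    then show ?thesis by simp
  qed
  also have "\<dots> = 2^n * 2^n" using fR 0 by (simp add: sum.delta)
  finally show ?thesis .
qed

lemma wal_exists:
  assumes f: "addB n f"
  shows "\<exists>a\<in>vecs n. (wal n f a)^2 = 2^n * int (card (Rad n f))"
proof (rule ccontr)
  assume "\<not> ?thesis"
  then have "\<forall>a\<in>vecs n. (wal n f a)^2 = 0" using wal_vals[OF f] by blast
  then have "(\<Sum>a\<in>vecs n. (wal n f a)^2) = 0" by simp
  then show False using parseval[OF f] by simp
qed

lemma wal_rad1:
  assumes f: "addB n f" and R: "Rad n f = {vzero n}" and a: "a \<in> vecs n"
  shows "(wal n f a)^2 = 2^n"
  using wal_sq[OF f a] R by simp

section \<open>Counting orthogonal vectors\<close>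

lemma dotp_add_sub: "\<phi> \<in> vecs n \<Longrightarrow> X \<subseteq> vecs n \<Longrightarrow> x \<in> X \<Longrightarrow> y \<in> X \<Longrightarrow>
  dotp \<phi> (vadd x y) = (dotp \<phi> x \<noteq> dotp \<phi> y)"
  by (rule dotp_add[of _ n]) auto

lemma perp_count:
  assumes X: "subsp n X"
  shows "int (card X) * int (card {\<phi>\<in>vecs n. \<forall>x\<in>X. \<not> dotp \<phi> x}) = 2^n"
proof -
  have XV: "X \<subseteq> vecs n" and 0: "vzero n \<in> X" using X unfolding subsp_def by auto
  have fX: "finite X" by (rule finite_subset[OF XV]) simp
  have "(\<Sum>\<phi>\<in>vecs n. \<Sum>x\<in>X. sg (dotp \<phi> x)) = (\<Sum>\<phi>\<in>vecs n. if \<forall>x\<in>X. \<not> dotp \<phi> x then int (card X) else 0)"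
  proof (rule sum.cong[OF refl])
    fix \<phi> assume ph: "\<phi> \<in> vecs n"
    show "(\<Sum>x\<in>X. sg (dotp \<phi> x)) = (if \<forall>x\<in>X. \<not> dotp \<phi> x then int (card X) else 0)"
      by (rule lin_sum[OF X]) (rule dotp_add_sub[OF ph XV])
  qed
  also have "\<dots> = (\<Sum>\<phi>\<in>{\<phi>\<in>vecs n. \<forall>x\<in>X. \<not> dotp \<phi> x}. int (card X))"
    by (rule sum.inter_filter[symmetric]) simp
  also have "\<dots> = int (card X) * int (card {\<phi>\<in>vecs n. \<forall>x\<in>X. \<not> dotp \<phi> x})" by simp
  finally have e1: "(\<Sum>\<phi>\<in>vecs n. \<Sum>x\<in>X. sg (dotp \<phi> x)) = int (card X) * int (card {\<phi>\<in>vecs n. \<forall>x\<in>X. \<not> dotp \<phi> x})" .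
  have "(\<Sum>\<phi>\<in>vecs n. \<Sum>x\<in>X. sg (dotp \<phi> x)) = (\<Sum>x\<in>X. \<Sum>\<phi>\<in>vecs n. sg (dotp \<phi> x))" by (rule sum.swap)
  also have "\<dots> = (\<Sum>x\<in>X. if x = vzero n then 2^n else 0)"
    by (rule sum.cong[OF refl]) (use XV in \<open>auto simp: char_sum card_vecs\<close>)
  also have "\<dots> = 2^n" using fX 0 by (simp add: sum.delta)
  finally show ?thesis using e1 by simp
qed

lemma perp_count2:
  assumes X: "subsp n X" and Y: "subsp n Y" and XY: "X \<inter> Y = {vzero n}"
  shows "int (card X) * int (card Y) * int (card {\<phi>\<in>vecs n. (\<forall>x\<in>X. \<not> dotp \<phi> x) \<and> (\<forall>y\<in>Y. \<not> dotp \<phi> y)}) = 2^n"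
proof -
  have XV: "X \<subseteq> vecs n" using X unfolding subsp_def by auto
  have YV: "Y \<subseteq> vecs n" using Y unfolding subsp_def by auto
  have fX: "finite X" by (rule finite_subset[OF XV]) simp
  have fY: "finite Y" by (rule finite_subset[OF YV]) simp
  have sX: "(\<Sum>x\<in>X. sg (dotp \<phi> x)) = (if \<forall>x\<in>X. \<not> dotp \<phi> x then int (card X) else 0)" if ph: "\<phi> \<in> vecs n" for \<phi>
    by (rule lin_sum[OF X]) (rule dotp_add_sub[OF ph XV])
  have sY: "(\<Sum>y\<in>Y. sg (dotp \<phi> y)) = (if \<forall>y\<in>Y. \<not> dotp \<phi> y then int (card Y) else 0)" if ph: "\<phi> \<in> vecs n" for \<phi>
    by (rule lin_sum[OF Y]) (rule dotp_add_sub[OF ph YV])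
  define PP where "PP \<phi> = ((\<forall>x\<in>X. \<not> dotp \<phi> x) \<and> (\<forall>y\<in>Y. \<not> dotp \<phi> y))" for \<phi>
  have "(\<Sum>\<phi>\<in>vecs n. (\<Sum>x\<in>X. sg (dotp \<phi> x)) * (\<Sum>y\<in>Y. sg (dotp \<phi> y))) =
        (\<Sum>\<phi>\<in>vecs n. if PP \<phi> then int (card X) * int (card Y) else 0)"
    by (rule sum.cong[OF refl]) (simp add: sX sY PP_def)
  also have "\<dots> = (\<Sum>\<phi>\<in>{\<phi>\<in>vecs n. PP \<phi>}. int (card X) * int (card Y))"
    by (rule sum.inter_filter[symmetric]) simp
  also have "\<dots> = int (card X) * int (card Y) * int (card {\<phi>\<in>vecs n. PP \<phi>})" by simp
  finally have e1: "(\<Sum>\<phi>\<in>vecs n. (\<Sum>x\<in>X. sg (dotp \<phi> x)) * (\<Sum>y\<in>Y. sg (dotp \<phi> y))) =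
     int (card X) * int (card Y) * int (card {\<phi>\<in>vecs n. PP \<phi>})" .
  have "(\<Sum>\<phi>\<in>vecs n. (\<Sum>x\<in>X. sg (dotp \<phi> x)) * (\<Sum>y\<in>Y. sg (dotp \<phi> y))) =
        (\<Sum>\<phi>\<in>vecs n. \<Sum>x\<in>X. \<Sum>y\<in>Y. sg (dotp \<phi> (vadd x y)))"
  proof (rule sum.cong[OF refl])
    fix \<phi> assume ph: "\<phi> \<in> vecs n"
    have "(\<Sum>x\<in>X. sg (dotp \<phi> x)) * (\<Sum>y\<in>Y. sg (dotp \<phi> y)) = (\<Sum>x\<in>X. \<Sum>y\<in>Y. sg (dotp \<phi> x) * sg (dotp \<phi> y))"
      by (rule sum_product)
    also have "\<dots> = (\<Sum>x\<in>X. \<Sum>y\<in>Y. sg (dotp \<phi> (vadd x y)))"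
    proof (intro sum.cong[OF refl])
      fix x y assume "x \<in> X" "y \<in> Y"
      then have "dotp \<phi> (vadd x y) = (dotp \<phi> x \<noteq> dotp \<phi> y)" using XV YV ph by (intro dotp_add[of _ n]) auto
      then show "sg (dotp \<phi> x) * sg (dotp \<phi> y) = sg (dotp \<phi> (vadd x y))" by (simp only: sg_xor)
    qed
    finally show "(\<Sum>x\<in>X. sg (dotp \<phi> x)) * (\<Sum>y\<in>Y. sg (dotp \<phi> y)) = (\<Sum>x\<in>X. \<Sum>y\<in>Y. sg (dotp \<phi> (vadd x y)))" .
  qed
  also have "\<dots> = (\<Sum>x\<in>X. \<Sum>\<phi>\<in>vecs n. \<Sum>y\<in>Y. sg (dotp \<phi> (vadd x y)))" by (rule sum.swap)
  also have "\<dots> = (\<Sum>x\<in>X. \<Sum>y\<in>Y. \<Sum>\<phi>\<in>vecs n. sg (dotp \<phi> (vadd x y)))" by (rule sum.cong[OF refl]) (rule sum.swap)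
  also have "\<dots> = (\<Sum>x\<in>X. \<Sum>y\<in>Y. if y = x then 2^n else 0)"
  proof (intro sum.cong[OF refl])
    fix x y assume xy: "x \<in> X" "y \<in> Y"
    then have l: "length x = n" "length y = n" using XV YV by auto
    have "(\<Sum>\<phi>\<in>vecs n. sg (dotp \<phi> (vadd x y))) = (if vadd x y = vzero n then 2^n else 0)"
      by (rule char_sum) (use l in simp)
    also have "(vadd x y = vzero n) = (y = x)" using vadd_eq_zero[OF l] by auto
    finally show "(\<Sum>\<phi>\<in>vecs n. sg (dotp \<phi> (vadd x y))) = (if y = x then 2^n else 0)" .
  qed
  also have "\<dots> = (\<Sum>x\<in>X. if x \<in> Y then 2^n else 0)"
    by (rule sum.cong[OF refl]) (use fY in \<open>simp add: sum.delta\<close>)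
  also have "\<dots> = (\<Sum>x\<in>X \<inter> Y. 2^n)" by (rule sum.inter_restrict[symmetric, OF fX])
  also have "\<dots> = 2^n" using XY by simp
  finally show ?thesis using e1 unfolding PP_def by simp
qed




lemma finite_len[simp]: "finite {x::bool list. length x = n \<and> P x}"
  by (rule finite_subset[of _ "vecs n"]) auto

lemma finite_len0[simp]: "finite {x::bool list. length x = n}"
  using finite_vecs[of n] unfolding vecs_def .

lemma comp_in: "maps_into n F \<Longrightarrow> x \<in> vecs n \<Longrightarrow> F x \<in> vecs n"
  unfolding maps_into_def by blast

lemma Bf_comp:
  assumes mi: "maps_into n F" and b: "b \<in> vecs n" and x: "x \<in> vecs n" and a: "a \<in> vecs n"
  shows "Bf n (component F b) x a =
    dotp b (vadd (vadd (F (vadd x a)) (F x)) (vadd (F a) (F (vzero n))))"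
proof -
  have l: "length (F (vadd x a)) = n" "length (F x) = n" "length (F a) = n" "length (F (vzero n)) = n"
    using comp_in[OF mi] x a by auto
  have lb: "length b = n" using b by simp
  show ?thesis unfolding Bf_def component_def
    using l lb by (simp add: dotp_add[of b n])
qed

lemma Rad_zero: "a \<in> vecs n \<Longrightarrow> a \<in> Rad n (component F (vzero n))"
  unfolding Rad_def Bf_def component_def by simp

lemma apn_count:
  assumes mi: "maps_into n F" and q: "is_quadratic n F" and apn: "is_APN n F"
    and a: "a \<in> vecs n" and a0: "a \<noteq> vzero n"
  shows "card {b\<in>vecs n. a \<in> Rad n (component F b)} = 2"
proof -
  define G where "G x = vadd (vadd (F (vadd x a)) (F x)) (vadd (F a) (F (vzero n)))" for x
  have GV: "G x \<in> vecs n" if "x \<in> vecs n" for x unfolding G_def using comp_in[OF mi] that a by simp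
  define c where "c = vadd (F a) (F (vzero n))"
  have cV: "c \<in> vecs n" unfolding c_def using comp_in[OF mi] a by simp
  have Gz: "G x = vzero n \<longleftrightarrow> vadd (F x) (F (vadd x a)) = c" if x: "x \<in> vecs n" for x
  proof -
    have l1: "length (vadd (F (vadd x a)) (F x)) = n" using comp_in[OF mi] x a by simp
    have "G x = vzero n \<longleftrightarrow> vadd (F (vadd x a)) (F x) = c"
      unfolding G_def c_def by (rule vadd_eq_zero[OF l1]) (use cV c_def in simp)
    then show ?thesis by (simp add: vadd_comm)
  qed
  define Sx where "Sx = {x\<in>vecs n. vadd (F x) (F (vadd x a)) = c}"
  have "card Sx \<le> 2" using apn a a0 cV unfolding is_APN_def Sx_def by blast
  moreover have "vzero n \<in> Sx" unfolding Sx_def c_def using a by (simp add: vadd_comm)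
  moreover have "a \<in> Sx" unfolding Sx_def c_def using a by simp
  moreover have "finite Sx" unfolding Sx_def by simp
  ultimately have cSx: "card Sx = 2"
  proof -
    assume "card Sx \<le> 2" "vzero n \<in> Sx" "a \<in> Sx" "finite Sx"
    then have "card {vzero n, a} \<le> card Sx" by (intro card_mono) auto
    then have "card Sx \<ge> 2" using a0 by simp
    then show ?thesis using \<open>card Sx \<le> 2\<close> by simp
  qed
  have e1: "(\<Sum>b\<in>vecs n. \<Sum>x\<in>vecs n. sg (Bf n (component F b) x a)) =
            2^n * int (card {b\<in>vecs n. a \<in> Rad n (component F b)})"
  proof -
    have "(\<Sum>b\<in>vecs n. \<Sum>x\<in>vecs n. sg (Bf n (component F b) x a)) =
          (\<Sum>b\<in>vecs n. if a \<in> Rad n (component F b) then 2^n else 0)"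
      by (rule sum.cong[OF refl]) (rule sumB[OF comp_addB[OF q] a])
    also have "\<dots> = (\<Sum>b\<in>{b\<in>vecs n. a \<in> Rad n (component F b)}. 2^n)"
      by (rule sum.inter_filter[symmetric]) simp
    finally show ?thesis by (simp add: mult.commute)
  qed
  have "(\<Sum>b\<in>vecs n. \<Sum>x\<in>vecs n. sg (Bf n (component F b) x a)) =
        (\<Sum>b\<in>vecs n. \<Sum>x\<in>vecs n. sg (dotp b (G x)))"
    unfolding G_def by (intro sum.cong[OF refl]) (simp add: Bf_comp[OF mi _ _ a])
  also have "\<dots> = (\<Sum>x\<in>vecs n. \<Sum>b\<in>vecs n. sg (dotp b (G x)))" by (rule sum.swap)
  also have "\<dots> = (\<Sum>x\<in>vecs n. if G x = vzero n then 2^n else 0)"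
    by (rule sum.cong[OF refl]) (rule char_sum[OF GV])
  also have "\<dots> = (\<Sum>x\<in>{x\<in>vecs n. G x = vzero n}. 2^n)"
    by (rule sum.inter_filter[symmetric]) simp
  also have "{x\<in>vecs n. G x = vzero n} = Sx" unfolding Sx_def using Gz by blast
  finally have "(\<Sum>b\<in>vecs n. \<Sum>x\<in>vecs n. sg (Bf n (component F b) x a)) = 2^n * 2"
    using cSx by simp
  then have "2^n * int (card {b\<in>vecs n. a \<in> Rad n (component F b)}) = 2^n * 2" using e1 by simp
  then show ?thesis by simp
qed

lemma apn_unique:
  assumes mi: "maps_into n F" and q: "is_quadratic n F" and apn: "is_APN n F"
    and a: "a \<in> vecs n" and a0: "a \<noteq> vzero n"
  shows "\<exists>b\<in>vecs n. b \<noteq> vzero n \<and> a \<in> Rad n (component F b)"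
    and "\<And>b b'. b \<in> vecs n \<Longrightarrow> b' \<in> vecs n \<Longrightarrow> b \<noteq> vzero n \<Longrightarrow> b' \<noteq> vzero n \<Longrightarrow>
           a \<in> Rad n (component F b) \<Longrightarrow> a \<in> Rad n (component F b') \<Longrightarrow> b = b'"
proof -
  define Bs where "Bs = {b\<in>vecs n. a \<in> Rad n (component F b)}"
  have cB: "card Bs = 2" unfolding Bs_def by (rule apn_count[OF mi q apn a a0])
  have zB: "vzero n \<in> Bs" unfolding Bs_def using Rad_zero[OF a] by simp
  have fB: "finite Bs" unfolding Bs_def by simp
  show "\<exists>b\<in>vecs n. b \<noteq> vzero n \<and> a \<in> Rad n (component F b)"
  proof (rule ccontr)
    assume "\<not> ?thesis"
    then have "Bs \<subseteq> {vzero n}" unfolding Bs_def by auto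
    then have "card Bs \<le> 1" using card_mono[of "{vzero n}" Bs] by simp
    then show False using cB by simp
  qed
  fix b b' assume h: "b \<in> vecs n" "b' \<in> vecs n" "b \<noteq> vzero n" "b' \<noteq> vzero n"
     "a \<in> Rad n (component F b)" "a \<in> Rad n (component F b')"
  show "b = b'"
  proof (rule ccontr)
    assume "b \<noteq> b'"
    then have "card {vzero n, b, b'} = 3" using h by simp
    moreover have "{vzero n, b, b'} \<subseteq> Bs" using h zB unfolding Bs_def by auto
    ultimately have "3 \<le> card Bs" using card_mono[OF fB] by metis
    then show False using cB by simp
  qed
qed




lemma ceil_half: "nat \<lceil>real m / 2\<rceil> = (m + 1) div 2"
proof -
  have "\<lceil>real m / 2\<rceil> = int ((m + 1) div 2)"
  proof (cases "even m")
    case True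
    then obtain j where j: "m = 2 * j" by blast
    then have "(m + 1) div 2 = j" by simp
    then show ?thesis unfolding ceiling_eq_iff using j by simp
  next
    case False
    then obtain j where j: "m = 2 * j + 1" using oddE by blast
    then have "(m + 1) div 2 = j + 1" by simp
    then show ?thesis unfolding ceiling_eq_iff using j by simp
  qed
  then show ?thesis by simp
qed

theorem mainTheorem8:
  fixes n k s r :: nat and F :: "bool list \<Rightarrow> bool list"
  assumes "even n"
    and "maps_into n F"
    and "is_quadratic n F"
    and "is_APN n F"
    and "real_of_int (linearity n F) = 2 powr ((real n + real k) / 2)"
    and "real k \<le> real n / 2"
    and "n = s * k + r" and "r < k"
  shows "(k dvd n \<longrightarrow> real (card (NF n F)) \<ge> (2 ^ n - 1) / (2 ^ k - 1))
       \<and> (\<not> k dvd n \<longrightarrow> real (card (NF n F)) \<ge>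
            1 + 2 ^ nat \<lceil>(real k + real r) / 2\<rceil>
              + 2 ^ (k + r) * (\<Sum>i = 0..s - 2. 2 ^ (i * k)))"
proof -
  note mi = assms(2) and qu = assms(3) and apn = assms(4) and lin = assms(5)
  have k1: "k \<ge> 1" using assms(8) by simp
  have kn: "2 * k \<le> n" using assms(6) by linarith
  define R where "R b = Rad n (component F b)" for b
  have addb: "addB n (component F b)" if "b \<in> vecs n" for b using comp_addB[OF qu that] .
  have Rsub: "subsp n (R b)" if "b \<in> vecs n" for b unfolding R_def using Rad_subsp[OF addb[OF that]] .
  have RV: "R b \<subseteq> vecs n" for b unfolding R_def by (rule Rad_sub)
  have finR: "finite (R b)" for b by (rule finite_subset[OF RV]) simp
  have R0: "vzero n \<in> R b" if "b \<in> vecs n" for b using Rsub[OF that] unfolding subsp_def by blast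
  have cR1: "card (R b) \<ge> 1" if "b \<in> vecs n" for b
  proof -
    have "card (R b) > 0" using R0[OF that] finR[of b] card_gt_0_iff by blast
    then show ?thesis by simp
  qed
  have Rpow: "\<exists>h. card (R b) = 2^h" if b: "b \<in> vecs n" for b
  proof -
    have "int (card (R b)) * int (card {\<phi>\<in>vecs n. \<forall>x\<in>R b. \<not> dotp \<phi> x}) = 2^n"
      by (rule perp_count[OF Rsub[OF b]])
    then have "int (card (R b) * card {\<phi>\<in>vecs n. \<forall>x\<in>R b. \<not> dotp \<phi> x}) = int (2^n)" by simp
    then have "card (R b) * card {\<phi>\<in>vecs n. \<forall>x\<in>R b. \<not> dotp \<phi> x} = 2^n" by (simp only: of_nat_eq_iff)
    then have "card (R b) dvd 2^n" by (intro dvdI[of _ _ "card {\<phi>\<in>vecs n. \<forall>x\<in>R b. \<not> dotp \<phi> x}"]) simp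
    then show ?thesis by (rule dvd_pow2)
  qed
  have wal_eq: "walsh n F b a = wal n (component F b) a" for b a
    unfolding walsh_def wal_def pow_sg ..
  have p2: "(2 powr (real n / 2))^2 = (2::real)^n"
    by (simp add: powr_power powr_realpow)
  have absp: "\<bar>real_of_int w\<bar> = 2 powr (real n / 2) \<longleftrightarrow> w^2 = 2^n" for w :: int
  proof -
    have "\<bar>real_of_int w\<bar> = 2 powr (real n / 2) \<longleftrightarrow> \<bar>real_of_int w\<bar>^2 = (2 powr (real n / 2))^2"
      by (rule power2_eq_iff_nonneg[symmetric]) auto
    also have "\<dots> \<longleftrightarrow> real_of_int (w^2) = real_of_int (2^n)" unfolding p2 by simp
    also have "\<dots> \<longleftrightarrow> w^2 = 2^n" by (rule of_int_eq_iff)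
    finally show ?thesis .
  qed
  have bent_iff: "is_bent_comp n F b \<longleftrightarrow> card (R b) = 1" if b: "b \<in> vecs n" for b
  proof
    assume bent: "is_bent_comp n F b"
    show "card (R b) = 1"
    proof (rule ccontr)
      assume c1: "card (R b) \<noteq> 1"
      have "\<bar>real_of_int (walsh n F b (vzero n))\<bar> = 2 powr (real n / 2)"
        using bent unfolding is_bent_comp_def by simp
      then have "(wal n (component F b) (vzero n))^2 = 2^n" unfolding wal_eq absp .
      moreover have "(wal n (component F b) (vzero n))^2 = 0 \<or> (wal n (component F b) (vzero n))^2 = 2^n * int (card (R b))"
        unfolding R_def by (rule wal_vals[OF addb[OF b]]) simp
      moreover have "card (R b) \<ge> 2" using c1 cR1[OF b] by simp
      ultimately show False by auto
    qed
  next
    assume c1: "card (R b) = 1"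
    then have "R b = {vzero n}" using R0[OF b] by (metis card_1_singletonE singletonD)
    then have "(wal n (component F b) a)^2 = 2^n" if "a \<in> vecs n" for a
      using wal_rad1[OF addb[OF b] _ that] unfolding R_def by simp
    then show "is_bent_comp n F b" unfolding is_bent_comp_def wal_eq absp by blast
  qed
  have NF_eq: "NF n F = {b\<in>vecs n. b \<noteq> vzero n \<and> card (R b) \<noteq> 1}"
    unfolding NF_def using bent_iff by auto
  have NFV: "NF n F \<subseteq> vecs n" unfolding NF_def by auto
  have finNF: "finite (NF n F)" by (rule finite_subset[OF NFV]) simp
  have Rk: "card (R b) \<le> 2^k" if bN: "b \<in> NF n F" for b
  proof -
    have b: "b \<in> vecs n" "b \<noteq> vzero n" using bN unfolding NF_def by auto
    obtain a where a: "a \<in> vecs n" "(wal n (component F b) a)^2 = 2^n * int (card (R b))"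
      using wal_exists[OF addb[OF b(1)]] unfolding R_def by blast
    have fin: "finite {\<bar>walsh n F b a\<bar> | a b. a \<in> vecs n \<and> b \<in> vecs n \<and> b \<noteq> vzero n}"
      by (rule finite_image_set2) simp_all
    have "\<bar>walsh n F b a\<bar> \<le> linearity n F"
      unfolding linearity_def by (rule Max_ge[OF fin]) (use a b in blast)
    then have "\<bar>real_of_int (walsh n F b a)\<bar> \<le> 2 powr ((real n + real k) / 2)" using lin by linarith
    then have X0: "(real_of_int (walsh n F b a))^2 \<le> (2 powr ((real n + real k) / 2))^2"
      by (simp add: power2_le_iff_abs_le)
    have "(2 powr ((real n + real k) / 2))^2 = 2 powr (real 2 * ((real n + real k) / 2))"
      by (rule powr_power) simp
    also have "real 2 * ((real n + real k) / 2) = real (n + k)" by simp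
    also have "(2::real) powr real (n + k) = 2^(n+k)" by (rule powr_realpow) simp
    finally have X: "(real_of_int (walsh n F b a))^2 \<le> (2::real)^(n+k)" using X0 by simp
    have "real_of_int ((walsh n F b a)^2) \<le> real_of_int ((2::int)^(n+k))" using X by simp
    then have "(walsh n F b a)^2 \<le> 2^(n+k)" by (simp only: of_int_le_iff)
    then have "2^n * int (card (R b)) \<le> 2^n * 2^k" using a(2) unfolding wal_eq by (simp add: power_add)
    then have "int (card (R b)) \<le> int (2^k)" by simp
    then show ?thesis by (simp only: of_nat_le_iff)
  qed
  have uniq1: "\<exists>b\<in>NF n F. a \<in> R b" if a: "a \<in> vecs n" "a \<noteq> vzero n" for a
  proof -
    obtain b where b: "b \<in> vecs n" "b \<noteq> vzero n" "a \<in> R b"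
      using apn_unique(1)[OF mi qu apn a] unfolding R_def by blast
    have "card {vzero n, a} \<le> card (R b)" using b R0[OF b(1)] finR by (intro card_mono) auto
    then have "card (R b) \<noteq> 1" using a by simp
    then show ?thesis using b unfolding NF_eq by blast
  qed
  have uniq2: "b = b'" if "b \<in> NF n F" "b' \<in> NF n F" "a \<in> R b" "a \<in> R b'" "a \<noteq> vzero n" for a b b'
  proof -
    have "a \<in> vecs n" using that RV by blast
    then show ?thesis using apn_unique(2)[OF mi qu apn _ that(5)] that unfolding R_def NF_def by blast
  qed
  have U: "(\<Union>b\<in>NF n F. R b - {vzero n}) = vecs n - {vzero n}"
    using RV uniq1 by blast
  have disj: "\<forall>b\<in>NF n F. \<forall>b'\<in>NF n F. b \<noteq> b' \<longrightarrow> (R b - {vzero n}) \<inter> (R b' - {vzero n}) = {}"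
    using uniq2 by blast
  have cV0: "int (card (vecs n - {vzero n})) = 2^n - 1" by (simp add: card_vecs)
  have ptsN: "(\<Sum>b\<in>NF n F. int (card (R b)) - 1) = 2^n - 1"
  proof -
    have "card (vecs n - {vzero n}) = (\<Sum>b\<in>NF n F. card (R b - {vzero n}))"
      unfolding U[symmetric] by (rule card_UN_disjoint[OF finNF _ disj]) (simp add: finR)
    also have "\<dots> = (\<Sum>b\<in>NF n F. card (R b) - 1)"
      by (rule sum.cong[OF refl]) (use R0 NFV finR in \<open>auto simp: card_Diff_singleton\<close>)
    finally have "int (card (vecs n - {vzero n})) = (\<Sum>b\<in>NF n F. int (card (R b) - 1))" by simp
    also have "\<dots> = (\<Sum>b\<in>NF n F. int (card (R b)) - 1)"
      by (rule sum.cong[OF refl]) (use cR1 NFV in \<open>auto simp: of_nat_diff\<close>)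
    finally show ?thesis using cV0 by simp
  qed
  show ?thesis
  proof (intro conjI impI)
    assume "k dvd n"
    have "(\<Sum>b\<in>NF n F. int (card (R b)) - 1) \<le> (\<Sum>b\<in>NF n F. 2^k - 1)"
    proof (rule sum_mono)
      fix b assume "b \<in> NF n F"
      then have "card (R b) \<le> 2^k" by (rule Rk)
      then have h: "int (card (R b)) \<le> int (2^k)" by (simp only: of_nat_le_iff)
      have "int (2^k) = (2::int)^k" by simp
      then show "int (card (R b)) - 1 \<le> 2^k - 1" using h by linarith
    qed
    then have "(2::int)^n - 1 \<le> int (card (NF n F)) * (2^k - 1)" using ptsN by simp
    then have "real_of_int (2^n - 1) \<le> real_of_int (int (card (NF n F)) * (2^k - 1))" by (simp only: of_int_le_iff)
    then have le: "(2::real)^n - 1 \<le> real (card (NF n F)) * (2^k - 1)" by simp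
    have "(2::real)^k \<ge> 2^1" by (rule power_increasing) (use k1 in auto)
    then have pos: "(0::real) < 2^k - 1" by simp
    show "(2 ^ n - 1) / (2 ^ k - 1) \<le> real (card (NF n F))"
      using le pos by (simp add: pos_divide_le_eq)
  next
    assume nd: "\<not> k dvd n"
    have r0: "0 < r"
    proof (rule ccontr)
      assume "\<not> 0 < r" then have "n = s * k" using assms(7) by simp
      then show False using nd by simp
    qed
    define Phi where "Phi = vecs n - {vzero n}"
    define P where "P \<phi> b = (\<forall>x\<in>R b. \<not> dotp \<phi> x)" for \<phi> b
    have I: "int (card (NF n F)) \<ge> 2^(k+r) * (\<Sum>i=0..s-2. 2^(i*k)) + 1 + 2^((k+r+1) div 2)"
    proof (rule comb_core[where Phi=Phi and z="\<lambda>b. int (card (R b))" and P=P and n=n])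
      show "finite (NF n F)" by (rule finNF)
      show "finite Phi" unfolding Phi_def by simp
      show "int (card Phi) = 2^n - 1" unfolding Phi_def by (rule cV0)
      show "n = s * k + r" by (rule assms(7))
      show "0 < r" by (rule r0)
      show "r < k" by (rule assms(8))
      show "2 * k \<le> n" by (rule kn)
      show "(\<Sum>U\<in>NF n F. int (card (R U)) - 1) = 2^n - 1" by (rule ptsN)
    next
      fix b assume bN: "b \<in> NF n F"
      have b: "b \<in> vecs n" using bN NFV by blast
      obtain h where h: "card (R b) = 2^h" using Rpow[OF b] by blast
      have "h \<noteq> 0" using h bN unfolding NF_eq by auto
      moreover have "h \<le> k"
      proof -
        have "(2::nat)^h \<le> 2^k" using Rk[OF bN] h by simp
        then show ?thesis by (rule power_le_imp_le_exp[rotated]) simp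
      qed
      ultimately show "\<exists>h. int (card (R b)) = 2^h \<and> 1 \<le> h \<and> h \<le> k" using h by (intro exI[of _ h]) simp
    next
      fix b assume bN: "b \<in> NF n F"
      have b: "b \<in> vecs n" using bN NFV by blast
      have "int (card (R b)) * int (card {\<phi>\<in>vecs n. P \<phi> b}) = 2^n"
        unfolding P_def by (rule perp_count[OF Rsub[OF b]])
      moreover have "{\<phi>\<in>vecs n. P \<phi> b} = insert (vzero n) {\<phi>\<in>Phi. P \<phi> b}"
        unfolding Phi_def P_def by auto
      moreover have "card (insert (vzero n) {\<phi>\<in>Phi. P \<phi> b}) = Suc (card {\<phi>\<in>Phi. P \<phi> b})"
        unfolding Phi_def by (rule card_insert_disjoint) auto
      ultimately show "int (card (R b)) * (int (card {\<phi>\<in>Phi. P \<phi> b}) + 1) = 2^n" by (simp add: add.commute)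
    next
      fix b b' assume bN: "b \<in> NF n F" and bN': "b' \<in> NF n F" and ne: "b \<noteq> b'"
      have b: "b \<in> vecs n" "b' \<in> vecs n" using bN bN' NFV by auto
      have inter: "R b \<inter> R b' = {vzero n}" using R0 b uniq2[OF bN bN'] ne by blast
      have "int (card (R b)) * int (card (R b')) * int (card {\<phi>\<in>vecs n. P \<phi> b \<and> P \<phi> b'}) = 2^n"
        unfolding P_def by (rule perp_count2[OF Rsub[OF b(1)] Rsub[OF b(2)] inter])
      moreover have "{\<phi>\<in>vecs n. P \<phi> b \<and> P \<phi> b'} = insert (vzero n) {\<phi>\<in>Phi. P \<phi> b \<and> P \<phi> b'}"
        unfolding Phi_def P_def by auto
      moreover have "card (insert (vzero n) {\<phi>\<in>Phi. P \<phi> b \<and> P \<phi> b'}) = Suc (card {\<phi>\<in>Phi. P \<phi> b \<and> P \<phi> b'})"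
        unfolding Phi_def by (rule card_insert_disjoint) auto
      ultimately show "int (card (R b)) * int (card (R b')) * (int (card {\<phi>\<in>Phi. P \<phi> b \<and> P \<phi> b'}) + 1) = 2^n"
        by (simp add: add.commute)
    next
      fix \<phi> assume ph: "\<phi> \<in> Phi"
      have phV: "\<phi> \<in> vecs n" "\<phi> \<noteq> vzero n" using ph unfolding Phi_def by auto
      have A: "(\<Sum>x\<in>vecs n - {vzero n}. sg (dotp \<phi> x)) = -1"
      proof -
        have "(\<Sum>x\<in>vecs n. sg (dotp \<phi> x)) = (\<Sum>x\<in>vecs n. sg (dotp x \<phi>))" by (simp add: dotp_comm)
        also have "\<dots> = 0" using char_sum[OF phV(1)] phV(2) by simp
        finally have "(\<Sum>x\<in>vecs n. sg (dotp \<phi> x)) = 0" .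
        moreover have "(\<Sum>x\<in>vecs n. sg (dotp \<phi> x)) = sg (dotp \<phi> (vzero n)) + (\<Sum>x\<in>vecs n - {vzero n}. sg (dotp \<phi> x))"
          by (rule sum.remove) simp_all
        ultimately show ?thesis by simp
      qed
      have B: "(\<Sum>x\<in>vecs n - {vzero n}. sg (dotp \<phi> x)) = (\<Sum>b\<in>NF n F. \<Sum>x\<in>R b - {vzero n}. sg (dotp \<phi> x))"
        unfolding U[symmetric] by (rule sum.UNION_disjoint[OF finNF _ disj]) (simp add: finR)
      have C: "(\<Sum>x\<in>R b - {vzero n}. sg (dotp \<phi> x)) = (if P \<phi> b then int (card (R b)) else 0) - 1"
        if bN: "b \<in> NF n F" for b
      proof -
        have b: "b \<in> vecs n" using bN NFV by blast
        have "(\<Sum>x\<in>R b. sg (dotp \<phi> x)) = (if P \<phi> b then int (card (R b)) else 0)"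
          unfolding P_def by (rule lin_sum[OF Rsub[OF b]]) (rule dotp_add_sub[OF phV(1) RV])
        moreover have "(\<Sum>x\<in>R b. sg (dotp \<phi> x)) = sg (dotp \<phi> (vzero n)) + (\<Sum>x\<in>R b - {vzero n}. sg (dotp \<phi> x))"
          by (rule sum.remove[OF finR R0[OF b]])
        ultimately show ?thesis by simp
      qed
      have "(\<Sum>b\<in>NF n F. (if P \<phi> b then int (card (R b)) else 0) - 1) = -1"
        using A B C by simp
      then have "(\<Sum>b\<in>NF n F. if P \<phi> b then int (card (R b)) else 0) = int (card (NF n F)) - 1"
        by (simp add: sum_subtractf)
      moreover have "(\<Sum>b\<in>{b\<in>NF n F. P \<phi> b}. int (card (R b))) = (\<Sum>b\<in>NF n F. if P \<phi> b then int (card (R b)) else 0)"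
        by (rule sum.inter_filter[OF finNF])
      ultimately show "(\<Sum>b\<in>{b\<in>NF n F. P \<phi> b}. int (card (R b))) = int (card (NF n F)) - 1" by simp
    qed
    have "real_of_int (2^(k+r) * (\<Sum>i=0..s-2. 2^(i*k)) + 1 + 2^((k+r+1) div 2)) \<le> real_of_int (int (card (NF n F)))"
      using I by (simp only: of_int_le_iff)
    moreover have "nat \<lceil>(real k + real r) / 2\<rceil> = (k + r + 1) div 2"
      using ceil_half[of "k + r"] by simp
    ultimately show "1 + 2 ^ nat \<lceil>(real k + real r) / 2\<rceil> + 2 ^ (k + r) * (\<Sum>i = 0..s - 2. 2 ^ (i * k)) \<le> real (card (NF n F))"
      by simp
  qed
qed


end
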